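(* Let $\mathbb P$ be a Bernoulli measure on $\partial\mathcal M$, let $V:\partial\mathcal M\to\overline{\mathcal M}$ be an AST, and let $\psi:\partial\mathcal M\to\mathbb R$ be $\mathcal F$-measurable and either non-negative or $\mathbb P$-integrable. Extend $\psi\circ\theta_V$ (defined on $\{|\xi_V|<\infty\}$) by $\psi\circ\theta_V=0$ on $\{|\xi_V|=\infty\}$. Then $\mathbb E(\psi\circ\theta_V\mid\mathcal F_V)=\mathbb E(\psi)$, $\mathbb P$-almost surely on $\{|\xi_V|<\infty\}$; equivalently, $\mathbb E(\mathbf 1_{\{V\in\mathcal M\}}\,\psi\circ\theta_V\mid\mathcal F_V)=\mathbf 1_{\{V\in\mathcal M\}}\mathbb E(\psi)$ $\mathbb P$-a.s.
   Context: Let $\Sigma$ be a finite set with at least two elements and $I\subseteq\Sigma\times\Sigma$ a symmetric irreflexive relation such that the graph $(\Sigma,D)$, $D=(\Sigma\times\Sigma)\setminus I$, is connected. The heap monoid $\mathcal M=\mathcal M(\Sigma,I)$ is the quotient of the free monoid $\Sigma^*$ by the smallest congruence containing all pairs $(ab,ba)$ with $(a,b)\in I$; its elements are heaps, $\cdot$ denotes concatenation and $0$ the empty heap. For $x\in\mathcal M$, $|x|$ is the length of any representative word. Write $x\le y$ if $y=x\cdot z$ for some $z\in\mathcal M$. A clique is a heap $a_1\cdots a_k$ of distinct pairwise independent pieces (possibly empty); $\mathfrak C$ is the set of nonempty cliques; $\gamma\to\gamma'$ means every piece of $\gamma'$ is dependent (not in $I$) on some piece of $\gamma$. Every nonempty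 heap has a unique Cartier–Foata decomposition $x=\gamma_1\cdots\gamma_n$, $\gamma_i\in\mathfrak C$, $\gamma_i\to\gamma_{i+1}$. An infinite heap is an infinite sequence $\xi=(\gamma_n)_{n\ge1}$ of nonempty cliques with $\gamma_n\to\gamma_{n+1}$; their set is the boundary $\partial\mathcal M$, $\overline{\mathcal M}=\mathcal M\cup\partial\mathcal M$ (a finite heap identified with its Cartier–Foata sequence padded with empty cliques), ordered by $\xi\le\xi'$ iff $\gamma_1\cdots\gamma_n\le\gamma'_1\cdots\gamma'_n$ for all $n$; nondecreasing sequences have least upper bounds $\bigvee$. Set $|\xi|=\infty$ for $\xi\in\partial\mathcal M$. For $x\in\mathcal M$, ${\uparrow}x=\{\xi\in\partial\mathcal M: x\le\xi\}$, and $\mathcal F$ is the $\sigma$-algebra on $\partial\mathcal M$ generated by these cylinders. A Bernoulli measure is a probability $\mathbb P$ on $(\partial\mathcal M,\mathcal F)$ with $\mathbb P({\uparrow}(x\cdot y))=\mathbb P({\uparrow}x)\mathbb P({\uparrow}y)$ and $\mathbb P({\uparrow}x)>0$ for all $x,y\in\mathcal M$; $\mathbb E$ denotes expectation under $\mathbb P$. An AST is a map $V:\partial\mathcal M\to\overline{\mathcal M}$, $\xi\mapsto\xi_V$, with (i) $\xi_V\le\xi$ and (ii) if $|\xi_V|<\infty$ and $\xi_V\le\xi'$ then $\xi'_V=\xi_V$. For $x\in\mathcal M$ and $\xi=(\gamma_n)\in\partial\mathcal M$, $x\cdot\xi=\bigvee_n x\cdot\gamma_1\cdots\gamma_n\in\partial\mathcal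 M$; $\xi\mapsto x\cdot\xi$ is a bijection $\partial\mathcal M\to{\uparrow}x$ whose inverse is denoted $\xi\mapsto\xi-x$. The shift of $V$ is $\theta_V(\xi)=\xi-\xi_V$, defined on $\{|\xi_V|<\infty\}$. $\mathcal F_V$ is the $\sigma$-algebra generated by the cylinders ${\uparrow}x$ for $x$ ranging over the set of finite values (values in $\mathcal M$) taken by $V$. *)

theory Defs
  imports "HOL-Probability.Probability"
begin

text \<open>Alphabet: a finite type 'a (the set Sigma is UNIV). I is the independence relation.\<close>

type_synonym 'a word = "'a list"
type_synonym 'a heap = "'a list set"           \<comment> \<open>a heap = trace-equivalence class of words\<close>
type_synonym 'a gheap = "nat \<Rightarrow> 'a set"      \<comment> \<open>sequence of cliques (Cartier-Foata form, 0-indexed)\<close>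

definition swap1 :: "('a \<times> 'a) set \<Rightarrow> 'a word \<Rightarrow> 'a word \<Rightarrow> bool" where
  "swap1 I u v \<longleftrightarrow> (\<exists>p q a b. (a, b) \<in> I \<and> u = p @ [a, b] @ q \<and> v = p @ [b, a] @ q)"

definition heap :: "('a \<times> 'a) set \<Rightarrow> 'a word \<Rightarrow> 'a heap" where
  "heap I w = {v. (swap1 I)\<^sup>*\<^sup>* w v}"

definition heaps :: "('a \<times> 'a) set \<Rightarrow> 'a heap set" where
  "heaps I = range (heap I)"

definition hmul :: "('a \<times> 'a) set \<Rightarrow> 'a heap \<Rightarrow> 'a heap \<Rightarrow> 'a heap" where
  "hmul I x y = heap I ((SOME u. u \<in> x) @ (SOME v. v \<in> y))"

definition hle :: "('a \<times> 'a) set \<Rightarrow> 'a heap \<Rightarrow> 'a heap \<Rightarrow> bool" where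
  "hle I x y \<longleftrightarrow> (\<exists>z \<in> heaps I. y = hmul I x z)"

definition clique :: "('a \<times> 'a) set \<Rightarrow> 'a set \<Rightarrow> bool" where
  "clique I c \<longleftrightarrow> (\<forall>a\<in>c. \<forall>b\<in>c. a \<noteq> b \<longrightarrow> (a, b) \<in> I)"

definition arrow :: "('a \<times> 'a) set \<Rightarrow> 'a set \<Rightarrow> 'a set \<Rightarrow> bool" where
  "arrow I c c' \<longleftrightarrow> (\<forall>b\<in>c'. \<exists>a\<in>c. (a, b) \<notin> I)"

text \<open>Generalized heaps (Mbar): Cartier-Foata sequences, finite ones padded with empty cliques.
  (arrow with an empty source and nonempty target fails, so padding is only at the end.)\<close>
definition Mbar :: "('a \<times> 'a) set \<Rightarrow> 'a gheap set" where
  "Mbar I = {\<xi>. \<forall>n. clique I (\<xi> n) \<and> arrow I (\<xi> n) (\<xi> (Suc n))}"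

definition boundary :: "('a \<times> 'a) set \<Rightarrow> 'a gheap set" where
  "boundary I = {\<xi> \<in> Mbar I. \<forall>n. \<xi> n \<noteq> {}}"

definition Mfin :: "('a \<times> 'a) set \<Rightarrow> 'a gheap set" where
  "Mfin I = {\<xi> \<in> Mbar I. \<exists>n. \<xi> n = {}}"

definition clique_word :: "'a set \<Rightarrow> 'a word" where
  "clique_word c = (SOME w. distinct w \<and> set w = c)"

definition pre :: "('a \<times> 'a) set \<Rightarrow> 'a gheap \<Rightarrow> nat \<Rightarrow> 'a heap" where
  "pre I \<xi> n = heap I (concat (map (\<lambda>i. clique_word (\<xi> i)) [0..<n]))"

definition cf :: "('a \<times> 'a) set \<Rightarrow> 'a heap \<Rightarrow> 'a gheap" where
  "cf I x = (THE \<xi>. \<xi> \<in> Mbar I \<and> (\<exists>n. \<xi> n = {} \<and> pre I \<xi> n = x))"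

definition fin :: "('a \<times> 'a) set \<Rightarrow> 'a gheap \<Rightarrow> 'a heap" where
  "fin I \<xi> = pre I \<xi> (LEAST n. \<xi> n = {})"

definition gle :: "('a \<times> 'a) set \<Rightarrow> 'a gheap \<Rightarrow> 'a gheap \<Rightarrow> bool" where
  "gle I \<xi> \<xi>' \<longleftrightarrow> (\<forall>n. hle I (pre I \<xi> n) (pre I \<xi>' n))"

definition glub :: "('a \<times> 'a) set \<Rightarrow> (nat \<Rightarrow> 'a gheap) \<Rightarrow> 'a gheap" where
  "glub I s = (THE \<zeta>. \<zeta> \<in> Mbar I \<and> (\<forall>n. gle I (s n) \<zeta>) \<and>
                  (\<forall>\<zeta>'\<in>Mbar I. (\<forall>n. gle I (s n) \<zeta>') \<longrightarrow> gle I \<zeta> \<zeta>'))"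

definition up :: "('a \<times> 'a) set \<Rightarrow> 'a heap \<Rightarrow> 'a gheap set" where
  "up I x = {\<xi> \<in> boundary I. gle I (cf I x) \<xi>}"

definition act :: "('a \<times> 'a) set \<Rightarrow> 'a heap \<Rightarrow> 'a gheap \<Rightarrow> 'a gheap" where
  "act I x \<xi> = glub I (\<lambda>n. cf I (hmul I x (pre I \<xi> n)))"

definition minus_heap :: "('a \<times> 'a) set \<Rightarrow> 'a gheap \<Rightarrow> 'a heap \<Rightarrow> 'a gheap" where
  "minus_heap I \<xi> x = (THE \<zeta>. \<zeta> \<in> boundary I \<and> act I x \<zeta> = \<xi>)"

definition cyl_space :: "('a \<times> 'a) set \<Rightarrow> 'a gheap measure" where
  "cyl_space I = sigma (boundary I) (up I ` heaps I)"

definition bernoulli :: "('a \<times> 'a) set \<Rightarrow> 'a gheap measure \<Rightarrow> bool" where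
  "bernoulli I P \<longleftrightarrow> prob_space P \<and> space P = boundary I \<and> sets P = sets (cyl_space I) \<and>
     (\<forall>x\<in>heaps I. \<forall>y\<in>heaps I.
        measure P (up I (hmul I x y)) = measure P (up I x) * measure P (up I y)) \<and>
     (\<forall>x\<in>heaps I. measure P (up I x) > 0)"

definition AST :: "('a \<times> 'a) set \<Rightarrow> ('a gheap \<Rightarrow> 'a gheap) \<Rightarrow> bool" where
  "AST I V \<longleftrightarrow> (\<forall>\<xi>\<in>boundary I. V \<xi> \<in> Mbar I \<and> gle I (V \<xi>) \<xi>) \<and>
     (\<forall>\<xi>\<in>boundary I. \<forall>\<xi>'\<in>boundary I.
        V \<xi> \<in> Mfin I \<and> gle I (V \<xi>) \<xi>' \<longrightarrow> V \<xi>' = V \<xi>)"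

definition shift :: "('a \<times> 'a) set \<Rightarrow> ('a gheap \<Rightarrow> 'a gheap) \<Rightarrow> 'a gheap \<Rightarrow> 'a gheap" where
  "shift I V \<xi> = minus_heap I \<xi> (fin I (V \<xi>))"

definition FV :: "('a \<times> 'a) set \<Rightarrow> ('a gheap \<Rightarrow> 'a gheap) \<Rightarrow> 'a gheap measure" where
  "FV I V = sigma (boundary I)
     {up I (fin I (V \<xi>)) | \<xi>. \<xi> \<in> boundary I \<and> V \<xi> \<in> Mfin I}"

definition shifted :: "('a \<times> 'a) set \<Rightarrow> ('a gheap \<Rightarrow> 'a gheap) \<Rightarrow> ('a gheap \<Rightarrow> real) \<Rightarrow> 'a gheap \<Rightarrow> real" where
  "shifted I V \<psi> \<xi> = (if V \<xi> \<in> Mfin I then \<psi> (shift I V \<xi>) else 0)"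

end

theory Submission
  imports Defs
begin

locale hp =
  fixes I :: "('a::finite \<times> 'a) set"
  assumes symI: "sym I" and irrI: "irrefl I"
begin

abbreviation eqv where "eqv \<equiv> (swap1 I)\<^sup>*\<^sup>*"

lemma I_sym: "(a, b) \<in> I \<Longrightarrow> (b, a) \<in> I"
  using symI by (auto simp: sym_def)

lemma I_irr[simp]: "(a, a) \<notin> I"
  using irrI by (auto simp: irrefl_def)

lemma swap1_sym: "swap1 I u v \<Longrightarrow> swap1 I v u"
  unfolding swap1_def using I_sym by blast

lemma eqv_sym: "eqv u v \<Longrightarrow> eqv v u"
proof (induction rule: rtranclp_induct)
  case base then show ?case by simp
next
  case (step y z) then show ?case
    by (meson converse_rtranclp_into_rtranclp swap1_sym)
qed

lemma eqv_trans: "eqv u v \<Longrightarrow> eqv v w \<Longrightarrow> eqv u w" by simp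

lemma swap1_app: "swap1 I u v \<Longrightarrow> swap1 I (x @ u @ y) (x @ v @ y)"
  unfolding swap1_def
  by (metis append.assoc)

lemma eqv_app_mid: "eqv u v \<Longrightarrow> eqv (x @ u @ y) (x @ v @ y)"
proof (induction rule: rtranclp_induct)
  case base then show ?case by simp
next
  case (step y' z) then show ?case
    by (meson rtranclp.rtrancl_into_rtrancl swap1_app)
qed

lemma eqv_app: "eqv u u' \<Longrightarrow> eqv v v' \<Longrightarrow> eqv (u @ v) (u' @ v')"
proof -
  assume a: "eqv u u'" "eqv v v'"
  have "eqv (u @ v) (u' @ v)" using eqv_app_mid[OF a(1), of "[]" v] by simp
  moreover have "eqv (u' @ v) (u' @ v')" using eqv_app_mid[OF a(2), of u' "[]"] by simp
  ultimately show ?thesis by simp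
qed

lemma eqv_length: "eqv u v \<Longrightarrow> length u = length v"
proof (induction rule: rtranclp_induct)
  case base then show ?case by simp
next
  case (step y z) then show ?case unfolding swap1_def by auto
qed

definition proj :: "'a \<Rightarrow> 'a \<Rightarrow> 'a list \<Rightarrow> 'a list" where
  "proj a b w = filter (\<lambda>c. c = a \<or> c = b) w"

lemma swap1_proj: "swap1 I u v \<Longrightarrow> (a, b) \<notin> I \<Longrightarrow> proj a b u = proj a b v"
proof -
  assume s: "swap1 I u v" and ab: "(a, b) \<notin> I"
  obtain p q c d where cd: "(c, d) \<in> I" "u = p @ [c, d] @ q" "v = p @ [d, c] @ q"
    using s unfolding swap1_def by blast
  have "c \<noteq> d" using cd(1) by auto
  have "\<not> (c \<in> {a,b} \<and> d \<in> {a,b})"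
    using cd(1) ab I_sym \<open>c \<noteq> d\<close> by auto
  then show ?thesis using cd(2,3) by (auto simp: proj_def)
qed

lemma eqv_proj: "eqv u v \<Longrightarrow> (a, b) \<notin> I \<Longrightarrow> proj a b u = proj a b v"
proof (induction rule: rtranclp_induct)
  case base then show ?case by simp
next
  case (step y z) then show ?case using swap1_proj by metis
qed

lemma commute_past: "\<forall>c\<in>set v. (a, c) \<in> I \<Longrightarrow> eqv (v @ [a]) (a # v)"
proof (induction v)
  case Nil then show ?case by simp
next
  case (Cons c v)
  have "swap1 I (c # a # v) (a # c # v)"
    unfolding swap1_def using Cons.prems I_sym
    by (metis append_Cons append_Nil list.set_intros(1))
  moreover have "eqv (c # v @ [a]) (c # a # v)"
    using eqv_app_mid[OF Cons.IH, of "[c]" "[]"] Cons.prems by simp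
  ultimately show ?case by simp
qed

lemma commute_past2: "\<forall>c\<in>set v. (a, c) \<in> I \<Longrightarrow> eqv (v @ a # w) (a # v @ w)"
  using eqv_app_mid[OF commute_past, of v a "[]" w] by simp

lemma proj_eqv: "(\<forall>a b. (a, b) \<notin> I \<longrightarrow> proj a b u = proj a b v) \<Longrightarrow> eqv u v"
proof (induction u arbitrary: v)
  case Nil
  show ?case
  proof (cases v)
    case Nil then show ?thesis by simp
  next
    case (Cons c v')
    then have "proj c c v \<noteq> []" by (simp add: proj_def)
    moreover have "proj c c [] = []" by (simp add: proj_def)
    ultimately show ?thesis using Nil.prems by (metis I_irr)
  qed
next
  case (Cons a u)
  have "proj a a v = a # proj a a u" using Cons.prems[rule_format, of a a] by (simp add: proj_def)
  then have "a \<in> set (proj a a v)" by simp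
  then have "a \<in> set v" unfolding proj_def by simp
  then obtain v1 v2 where v: "v = v1 @ a # v2" and na: "a \<notin> set v1"
    by (meson split_list_first)
  have ind: "\<forall>c\<in>set v1. (a, c) \<in> I"
  proof
    fix c assume c: "c \<in> set v1"
    show "(a, c) \<in> I"
    proof (rule ccontr)
      assume d: "(a, c) \<notin> I"
      have "c \<noteq> a" using c na by auto
      have pa: "proj a c (a # u) = a # proj a c u" by (simp add: proj_def)
      have ne: "proj a c v1 \<noteq> []" using c unfolding proj_def filter_empty_conv by blast
      have sc: "set (proj a c v1) \<subseteq> {c}" using na by (auto simp: proj_def)
      obtain x xs where xs0: "proj a c v1 = x # xs"
        using ne by (cases "proj a c v1") auto
      have "x \<in> set (proj a c v1)" using xs0 by simp
      then have "x = c" using sc by blast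
      then have xs: "proj a c v1 = c # xs" using xs0 by simp
      have "proj a c v = proj a c v1 @ proj a c (a # v2)" using v by (simp add: proj_def)
      then have "hd (proj a c v) = c" using xs by simp
      moreover have "proj a c (a # u) = proj a c v" using Cons.prems d by blast
      ultimately show False using pa \<open>c \<noteq> a\<close> by (metis list.sel(1))
    qed
  qed
  have e1: "eqv v (a # v1 @ v2)" using v commute_past2[OF ind] by simp
  have "\<forall>x y. (x, y) \<notin> I \<longrightarrow> proj x y u = proj x y (v1 @ v2)"
  proof (intro allI impI)
    fix x y assume xy: "(x, y) \<notin> I"
    have "proj x y (a # u) = proj x y (a # v1 @ v2)"
      using Cons.prems xy eqv_proj[OF e1 xy] by simp
    then show "proj x y u = proj x y (v1 @ v2)" by (auto simp: proj_def split: if_splits)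
  qed
  then have "eqv u (v1 @ v2)" using Cons.IH by blast
  then have "eqv (a # u) (a # v1 @ v2)" using eqv_app_mid[of u "v1 @ v2" "[a]" "[]"] by simp
  then show ?case using eqv_sym[OF e1] by simp
qed

lemma eqv_iff_proj: "eqv u v \<longleftrightarrow> (\<forall>a b. (a, b) \<notin> I \<longrightarrow> proj a b u = proj a b v)"
  using eqv_proj proj_eqv by blast

lemma eqv_cancel_left: "eqv (x @ u) (x @ v) \<Longrightarrow> eqv u v"
  unfolding eqv_iff_proj proj_def by auto

lemma eqv_cancel_right: "eqv (u @ x) (v @ x) \<Longrightarrow> eqv u v"
  unfolding eqv_iff_proj proj_def by auto

lemma distinct_le1_eq:
  assumes "distinct xs" "distinct ys" "set xs = set ys" "card (set xs) \<le> 1"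
  shows "xs = ys"
proof -
  have "length xs \<le> 1" "length ys \<le> 1" using assms distinct_card by metis+
  then show ?thesis using assms(3)
    by (cases xs; cases ys) (auto simp: le_Suc_eq)
qed

lemma clique_perm:
  assumes "distinct xs" "distinct ys" "set xs = set ys" "clique I (set xs)"
  shows "eqv xs ys"
proof (rule proj_eqv, intro allI impI)
  fix a b assume ab: "(a, b) \<notin> I"
  have sub: "set xs \<inter> {a, b} \<subseteq> {a} \<or> set xs \<inter> {a, b} \<subseteq> {b}"
    using assms(4) ab unfolding clique_def by blast
  have "card (set xs \<inter> {a,b}) \<le> 1"
  proof -
    have "card (set xs \<inter> {a,b}) \<le> card {a} \<or> card (set xs \<inter> {a,b}) \<le> card {b}"
      using sub by (meson card_mono finite.intros)
    then show ?thesis by auto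
  qed
  moreover have "set (proj a b xs) = set xs \<inter> {a,b}" "set (proj a b ys) = set ys \<inter> {a,b}"
    by (auto simp: proj_def)
  ultimately show "proj a b xs = proj a b ys"
    using assms by (intro distinct_le1_eq) (auto simp: proj_def)
qed

end

context hp begin

definition nh :: "('a \<times> nat) set \<Rightarrow> 'a \<Rightarrow> nat" where
  "nh S a = Suc (Max (insert 0 (snd ` {p\<in>S. (a, fst p) \<notin> I})))"

definition step :: "('a \<times> nat) set \<Rightarrow> 'a \<Rightarrow> ('a \<times> nat) set" where
  "step S a = insert (a, nh S a) S"

definition pcs :: "'a list \<Rightarrow> ('a \<times> nat) set" where
  "pcs w = foldl step {} w"

lemma pcs_Nil[simp]: "pcs [] = {}" by (simp add: pcs_def)
lemma pcs_snoc[simp]: "pcs (w @ [a]) = step (pcs w) a" by (simp add: pcs_def)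
lemma pcs_append: "pcs (u @ v) = foldl step (pcs u) v" by (simp add: pcs_def)

lemma finite_foldl: "finite S \<Longrightarrow> finite (foldl step S w)"
  by (induction w arbitrary: S) (auto simp: step_def)

lemma finite_pcs[simp]: "finite (pcs w)"
  unfolding pcs_def by (rule finite_foldl) simp

lemma foldl_mono: "S \<subseteq> foldl step S w"
proof (induction w arbitrary: S)
  case Nil then show ?case by simp
next
  case (Cons a w)
  have "S \<subseteq> step S a" by (auto simp: step_def)
  then show ?case using Cons.IH[of "step S a"] by simp
qed

lemma pcs_mono: "pcs u \<subseteq> pcs (u @ v)"
  by (simp add: pcs_append foldl_mono)

lemma nh_gt: "finite S \<Longrightarrow> (b, h) \<in> S \<Longrightarrow> (a, b) \<notin> I \<Longrightarrow> h < nh S a"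
proof -
  assume f: "finite S" and bh: "(b, h) \<in> S" and ab: "(a, b) \<notin> I"
  have "h \<in> insert 0 (snd ` {p\<in>S. (a, fst p) \<notin> I})" using bh ab by force
  moreover have "finite (insert 0 (snd ` {p\<in>S. (a, fst p) \<notin> I}))" using f by simp
  ultimately have "h \<le> Max (insert 0 (snd ` {p\<in>S. (a, fst p) \<notin> I}))" by simp
  then show ?thesis by (simp add: nh_def)
qed

lemma nh_le:
  assumes "finite S" "\<And>b h. (b, h) \<in> S \<Longrightarrow> (a, b) \<notin> I \<Longrightarrow> h < k" "0 < k"
  shows "nh S a \<le> k"
proof -
  have "\<forall>x\<in>insert 0 (snd ` {p\<in>S. (a, fst p) \<notin> I}). x < k" using assms by auto
  moreover have "finite (insert 0 (snd ` {p\<in>S. (a, fst p) \<notin> I}))" using assms by simp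
  ultimately have "Max (insert 0 (snd ` {p\<in>S. (a, fst p) \<notin> I})) < k" by simp
  then show ?thesis by (simp add: nh_def)
qed

lemma nh_pos: "0 < nh S a" by (simp add: nh_def)

lemma nh_cong: "{p\<in>S. (a, fst p) \<notin> I} = {p\<in>T. (a, fst p) \<notin> I} \<Longrightarrow> nh S a = nh T a"
  by (simp add: nh_def)

lemma nh_notin: "finite S \<Longrightarrow> (a, nh S a) \<notin> S"
  using nh_gt[of S a "nh S a" a] by auto

lemma nh_exists:
  assumes "finite S" "nh S a = Suc m" "0 < m"
  shows "\<exists>b. (b, m) \<in> S \<and> (a, b) \<notin> I"
proof -
  let ?M = "insert 0 (snd ` {p\<in>S. (a, fst p) \<notin> I})"
  have "Max ?M = m" using assms(2) by (simp add: nh_def)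
  moreover have "Max ?M \<in> ?M" using assms(1) by (intro Max_in) auto
  ultimately have "m \<in> ?M" by simp
  then show ?thesis using assms(3) by auto
qed

lemma nh_insert_indep: "(b, a) \<in> I \<Longrightarrow> nh (insert (a, x) S) b = nh S b"
  by (rule nh_cong) auto

lemma step_comm: "(a, b) \<in> I \<Longrightarrow> step (step S a) b = step (step S b) a"
  unfolding step_def
  using nh_insert_indep[of b a] nh_insert_indep[of a b] I_sym by auto

lemma pcs_swap: "swap1 I u v \<Longrightarrow> pcs u = pcs v"
proof -
  assume "swap1 I u v"
  then obtain p q a b where "(a, b) \<in> I" "u = p @ [a, b] @ q" "v = p @ [b, a] @ q"
    unfolding swap1_def by blast
  then show ?thesis using step_comm[of a b "foldl step {} p"] by (simp add: pcs_def)
qed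

lemma pcs_eqv: "eqv u v \<Longrightarrow> pcs u = pcs v"
proof (induction rule: rtranclp_induct)
  case base then show ?case by simp
next
  case (step y z) then show ?case using pcs_swap by simp
qed

lemma pcs_pos: "p \<in> pcs w \<Longrightarrow> 0 < snd p"
  by (induction w rule: rev_induct) (auto simp: step_def nh_pos)

lemma pcs_le_len: "p \<in> pcs w \<Longrightarrow> snd p \<le> length w"
proof (induction w arbitrary: p rule: rev_induct)
  case Nil then show ?case by simp
next
  case (snoc a w)
  have "nh (pcs w) a \<le> Suc (length w)"
    by (rule nh_le) (use snoc.IH in force)+
  moreover have "\<And>q. q \<in> pcs w \<Longrightarrow> snd q \<le> Suc (length w)" using snoc.IH by force
  ultimately show ?case using snoc.prems by (cases p) (auto simp: step_def)
qed

lemma card_pcs: "card (pcs w) = length w"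
  by (induction w rule: rev_induct) (auto simp: step_def nh_notin)

lemma pcs_dep_neq:
  "(a, i) \<in> pcs w \<Longrightarrow> (b, j) \<in> pcs w \<Longrightarrow> (a, b) \<notin> I \<Longrightarrow> (a, i) \<noteq> (b, j) \<Longrightarrow> i \<noteq> j"
proof (induction w arbitrary: a i b j rule: rev_induct)
  case Nil then show ?case by simp
next
  case (snoc c w)
  have symD: "(b, a) \<notin> I" using snoc.prems(3) I_sym by blast
  show ?case
  proof (cases "(a, i) \<in> pcs w \<and> (b, j) \<in> pcs w")
    case True then show ?thesis using snoc by blast
  next
    case False
    then have "(a, i) = (c, nh (pcs w) c) \<or> (b, j) = (c, nh (pcs w) c)"
      using snoc.prems(1,2) by (auto simp: step_def)
    then show ?thesis
    proof
      assume e: "(a, i) = (c, nh (pcs w) c)"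
      then have "(b, j) \<in> pcs w" using snoc.prems(2,4) by (auto simp: step_def)
      then show ?thesis using nh_gt[of "pcs w" b j c] e snoc.prems(3) by auto
    next
      assume e: "(b, j) = (c, nh (pcs w) c)"
      then have "(a, i) \<in> pcs w" using snoc.prems(1,4) by (auto simp: step_def)
      then show ?thesis using nh_gt[of "pcs w" a i c] e symD by auto
    qed
  qed
qed

lemma pcs_down:
  "(b, j) \<in> pcs w \<Longrightarrow> 1 < j \<Longrightarrow> \<exists>a. (a, j - 1) \<in> pcs w \<and> (b, a) \<notin> I"
proof (induction w arbitrary: b j rule: rev_induct)
  case Nil then show ?case by simp
next
  case (snoc c w)
  show ?case
  proof (cases "(b, j) \<in> pcs w")
    case True then show ?thesis using snoc.IH[OF True snoc.prems(2)] by (auto simp: step_def)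
  next
    case False
    then have e: "b = c" "j = nh (pcs w) c" using snoc.prems(1) by (auto simp: step_def)
    have "nh (pcs w) c = Suc (j - 1)" "0 < j - 1" using e snoc.prems(2) by auto
    then show ?thesis using nh_exists[of "pcs w" c "j - 1"] e by (auto simp: step_def)
  qed
qed

lemma foldl_new_gt:
  "finite S \<Longrightarrow> (b, j) \<in> foldl step S z \<Longrightarrow> (b, j) \<notin> S \<Longrightarrow> (a, i) \<in> S \<Longrightarrow> (b, a) \<notin> I \<Longrightarrow> i < j"
proof (induction z arbitrary: S)
  case Nil then show ?case by simp
next
  case (Cons c z)
  have fs: "finite (step S c)" using Cons.prems(1) by (simp add: step_def)
  show ?case
  proof (cases "(b, j) \<in> step S c")
    case True
    then have "b = c" "j = nh S c" using Cons.prems(3) by (auto simp: step_def)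
    then show ?thesis using nh_gt[OF Cons.prems(1) Cons.prems(4)] Cons.prems(5) by simp
  next
    case False
    then show ?thesis using Cons.IH[OF fs _ False] Cons.prems by (auto simp: step_def)
  qed
qed

lemma pcs_new_gt:
  "(b, j) \<in> pcs (u @ z) \<Longrightarrow> (b, j) \<notin> pcs u \<Longrightarrow> (a, i) \<in> pcs u \<Longrightarrow> (a, b) \<notin> I \<Longrightarrow> i < j"
  using foldl_new_gt[of "pcs u" b j z a i] I_sym by (auto simp: pcs_append)

definition clsd :: "('a \<times> nat) set \<Rightarrow> ('a \<times> nat) set \<Rightarrow> bool" where
  "clsd S T \<longleftrightarrow> S \<subseteq> T \<and> (\<forall>a i b j. (a, i) \<in> S \<longrightarrow> (b, j) \<in> T \<longrightarrow> (a, b) \<notin> I \<longrightarrow> j < i \<longrightarrow> (b, j) \<in> S)"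

lemma clsd_refl: "clsd S S" by (auto simp: clsd_def)

lemma clsd_trans: "clsd A B \<Longrightarrow> clsd B C \<Longrightarrow> clsd A C"
  unfolding clsd_def by blast

lemma clsd_Un: "clsd A T \<Longrightarrow> clsd B T \<Longrightarrow> clsd (A \<union> B) T"
  unfolding clsd_def by (metis Un_iff Un_least)

lemma clsd_UN:
  assumes h: "\<And>x. x \<in> X \<Longrightarrow> clsd (A x) T"
  shows "clsd (\<Union>x\<in>X. A x) T"
  unfolding clsd_def
proof (intro conjI allI impI)
  show "(\<Union>x\<in>X. A x) \<subseteq> T"
  proof
    fix p assume "p \<in> (\<Union>x\<in>X. A x)"
    then obtain x where "x \<in> X" "p \<in> A x" by blast
    then show "p \<in> T" using h[of x] unfolding clsd_def by blast
  qed
next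
  fix a i b j assume ai: "(a, i) \<in> (\<Union>x\<in>X. A x)" and r: "(b, j) \<in> T" "(a, b) \<notin> I" "j < i"
  then obtain x where x: "x \<in> X" "(a, i) \<in> A x" by blast
  then have "(b, j) \<in> A x" using h[OF x(1)] r unfolding clsd_def by blast
  then show "(b, j) \<in> (\<Union>x\<in>X. A x)" using x(1) by blast
qed

lemma clsd_sub: "clsd S U \<Longrightarrow> S \<subseteq> T \<Longrightarrow> T \<subseteq> U \<Longrightarrow> clsd S T"
  unfolding clsd_def by blast

lemma clsd_antisym: "clsd A B \<Longrightarrow> clsd B A \<Longrightarrow> A = B"
  unfolding clsd_def by blast

lemma prefix_clsd: "clsd (pcs u) (pcs (u @ z))"
  unfolding clsd_def using pcs_mono pcs_new_gt by fastforce

lemma clsd_eqv: "eqv h (u @ z) \<Longrightarrow> clsd (pcs u) (pcs h)"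
  using prefix_clsd pcs_eqv by metis

lemma all_indep_commute: "\<forall>c\<in>set z. (b, c) \<in> I \<Longrightarrow> eqv (z @ [b]) (b # z)"
  using commute_past by blast

lemma realize:
  "clsd S (pcs H) \<Longrightarrow> \<exists>w z. eqv H (w @ z) \<and> pcs w = S"
proof (induction H arbitrary: S rule: rev_induct)
  case Nil
  then have "S = {}" by (auto simp: clsd_def)
  then show ?case by (intro exI[of _ "[]"]) auto
next
  case (snoc b H)
  define j where "j = nh (pcs H) b"
  have pH: "pcs (H @ [b]) = insert (b, j) (pcs H)" by (simp add: step_def j_def)
  have jn: "(b, j) \<notin> pcs H" using nh_notin j_def by simp
  show ?case
  proof (cases "(b, j) \<in> S")
    case False
    have "S \<subseteq> pcs (H @ [b])" using snoc.prems unfolding clsd_def by blast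
    then have "S \<subseteq> pcs H" using False pH by auto
    then have "clsd S (pcs H)" using clsd_sub[OF snoc.prems] pH by blast
    then obtain w z where wz: "eqv H (w @ z)" "pcs w = S" using snoc.IH by blast
    have "eqv (H @ [b]) ((w @ z) @ [b])" using eqv_app[of H "w@z" "[b]" "[b]"] wz(1) by simp
    then show ?thesis using wz(2) by (intro exI[of _ w] exI[of _ "z @ [b]"]) simp
  next
    case True
    define S' where "S' = S - {(b, j)}"
    have cS: "clsd S (pcs (H @ [b]))" using snoc.prems .
    have "clsd S' (pcs H)"
      unfolding clsd_def
    proof (intro conjI allI impI)
      show "S' \<subseteq> pcs H" using cS pH unfolding S'_def clsd_def by blast
    next
      fix a i c l assume h: "(a, i) \<in> S'" "(c, l) \<in> pcs H" "(a, c) \<notin> I" "l < i"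
      then have "(c, l) \<in> S" using cS pH unfolding S'_def clsd_def by blast
      moreover have "(c, l) \<noteq> (b, j)" using h(2) jn by auto
      ultimately show "(c, l) \<in> S'" unfolding S'_def by blast
    qed
    then obtain w z where wz: "eqv H (w @ z)" "pcs w = S'" using snoc.IH by blast
    have pHwz: "pcs H = pcs (w @ z)" using pcs_eqv[OF wz(1)] .
    have ind: "\<forall>c\<in>set z. (b, c) \<in> I"
    proof
      fix c assume c: "c \<in> set z"
      show "(b, c) \<in> I"
      proof (rule ccontr)
        assume d: "(b, c) \<notin> I"
        obtain z1 z2 where z: "z = z1 @ c # z2" using c by (meson split_list)
        define l where "l = nh (pcs (w @ z1)) c"
        have l1: "(c, l) \<notin> pcs (w @ z1)" using nh_notin l_def by simp
        have "(c, l) \<in> pcs ((w @ z1) @ [c])" by (simp only: pcs_snoc) (simp add: step_def l_def)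
        then have "(c, l) \<in> pcs (w @ z1 @ [c])" by simp
        then have l2: "(c, l) \<in> pcs H" using pHwz z pcs_mono[of "w @ z1 @ [c]" z2] by auto
        have "l < j" using nh_gt[OF finite_pcs l2 d] j_def by simp
        then have "(c, l) \<in> S" using cS True l2 pH d unfolding clsd_def by blast
        moreover have "(c, l) \<noteq> (b, j)" using l2 jn by auto
        ultimately have "(c, l) \<in> pcs w" using wz(2) S'_def by blast
        then show False using l1 pcs_mono[of w z1] by blast
      qed
    qed
    have e1: "eqv (H @ [b]) (w @ z @ [b])" using eqv_app[OF wz(1), of "[b]" "[b]"] by simp
    have "eqv (w @ z @ [b]) (w @ b # z)" using eqv_app_mid[OF all_indep_commute[OF ind], of w "[]"] by simp
    then have e2: "eqv (H @ [b]) ((w @ [b]) @ z)" using e1 by simp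
    have "nh S' b = j"
      unfolding j_def
    proof (rule nh_cong, rule set_eqI, rule iffI)
      fix p assume "p \<in> {p \<in> S'. (b, fst p) \<notin> I}"
      then show "p \<in> {p \<in> pcs H. (b, fst p) \<notin> I}" using \<open>clsd S' (pcs H)\<close> unfolding clsd_def by blast
    next
      fix p assume p: "p \<in> {p \<in> pcs H. (b, fst p) \<notin> I}"
      obtain c l where cl: "p = (c, l)" by fastforce
      have "l < j" using nh_gt[OF finite_pcs, of c l H b] p cl j_def by simp
      moreover have "(c, l) \<in> pcs (H @ [b])" using p cl pH by auto
      moreover have "(b, c) \<notin> I" using p cl by auto
      ultimately have "(c, l) \<in> S" using cS True unfolding clsd_def by blast
      moreover have "(c, l) \<noteq> (b, j)" using p cl jn by auto
      ultimately show "p \<in> {p \<in> S'. (b, fst p) \<notin> I}" using p cl S'_def by blast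
    qed
    then have "pcs (w @ [b]) = S" using wz(2) True by (auto simp: step_def S'_def)
    then show ?thesis using e2 by blast
  qed
qed

lemma pcs_complete: "pcs u = pcs v \<Longrightarrow> eqv u v"
proof (induction u arbitrary: v rule: rev_induct)
  case Nil
  then have "length v = 0" using card_pcs by (metis card.empty pcs_Nil)
  then show ?case by simp
next
  case (snoc a u)
  have "clsd (pcs u) (pcs v)" using snoc.prems prefix_clsd by metis
  then obtain w z where wz: "eqv v (w @ z)" "pcs w = pcs u" using realize by blast
  have eu: "eqv u w" using snoc.IH wz(2) by simp
  have "length v = Suc (length u)" using card_pcs snoc.prems by (metis length_append_singleton)
  moreover have "length v = length w + length z" using eqv_length[OF wz(1)] by simp
  moreover have "length w = length u" using eqv_length[OF eu] by simp
  ultimately obtain c where z: "z = [c]" by (cases z) auto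
  have "pcs v = insert (c, nh (pcs u) c) (pcs u)" using pcs_eqv[OF wz(1)] z wz(2) by (simp add: step_def)
  moreover have "pcs v = insert (a, nh (pcs u) a) (pcs u)" using snoc.prems by (simp add: step_def)
  moreover have "(c, nh (pcs u) c) \<notin> pcs u" "(a, nh (pcs u) a) \<notin> pcs u" using nh_notin by auto
  ultimately have "c = a" by (metis Pair_inject insertE insert_iff)
  have "eqv (w @ z) (u @ [a])" using eqv_app[OF eqv_sym[OF eu], of "[a]" "[a]"] z \<open>c = a\<close> by simp
  then show ?case using wz(1) eqv_sym by (meson rtranclp_trans)
qed

lemma eqv_iff_pcs: "eqv u v \<longleftrightarrow> pcs u = pcs v"
  using pcs_eqv pcs_complete by blast

lemma prefix_iff: "(\<exists>z. eqv w (u @ z)) \<longleftrightarrow> clsd (pcs u) (pcs w)"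
proof
  assume "\<exists>z. eqv w (u @ z)" then show "clsd (pcs u) (pcs w)" using clsd_eqv by blast
next
  assume "clsd (pcs u) (pcs w)"
  then obtain w' z where "eqv w (w' @ z)" "pcs w' = pcs u" using realize by blast
  then show "\<exists>z. eqv w (u @ z)"
    by (metis eqv_app eqv_iff_pcs rtranclp.rtrancl_refl rtranclp_trans)
qed

end

context hp begin

lemma clique_word: "distinct (clique_word (c::'a set)) \<and> set (clique_word c) = c"
  unfolding clique_word_def by (rule someI_ex) (metis finite_distinct_list finite)

definition cws :: "'a gheap \<Rightarrow> nat \<Rightarrow> 'a list" where
  "cws \<xi> n = concat (map (\<lambda>i. clique_word (\<xi> i)) [0..<n])"

lemma cws_0[simp]: "cws \<xi> 0 = []" by (simp add: cws_def)
lemma cws_Suc: "cws \<xi> (Suc n) = cws \<xi> n @ clique_word (\<xi> n)" by (simp add: cws_def)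
lemma pre_cws: "pre I \<xi> n = heap I (cws \<xi> n)" by (simp add: pre_def cws_def)

definition Pc :: "'a gheap \<Rightarrow> nat \<Rightarrow> ('a \<times> nat) set" where
  "Pc \<xi> n = {(a, Suc k) | a k. a \<in> \<xi> k \<and> k < n}"

definition Pg :: "'a gheap \<Rightarrow> ('a \<times> nat) set" where
  "Pg \<xi> = {(a, Suc k) | a k. a \<in> \<xi> k}"

lemma finite_Pc: "finite (Pc \<xi> n)"
proof -
  have "Pc \<xi> n \<subseteq> UNIV \<times> {..n}" by (auto simp: Pc_def)
  then show ?thesis by (rule finite_subset) simp
qed

lemma Pc_Pg: "Pc \<xi> n = {p \<in> Pg \<xi>. snd p \<le> n}"
  by (auto simp: Pc_def Pg_def)

lemma foldl_clique:
  "distinct xs \<Longrightarrow> clique I (set xs) \<Longrightarrow> finite S \<Longrightarrow> (\<forall>a\<in>set xs. nh S a = m)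
   \<Longrightarrow> foldl step S xs = S \<union> (\<lambda>a. (a, m)) ` set xs"
proof (induction xs arbitrary: S)
  case Nil then show ?case by simp
next
  case (Cons a xs)
  have "\<forall>b\<in>set xs. nh (step S a) b = m"
  proof
    fix b assume b: "b \<in> set xs"
    then have "a \<noteq> b" using Cons.prems(1) by auto
    then have "(a, b) \<in> I" using Cons.prems(2) b unfolding clique_def by auto
    then have "(b, a) \<in> I" using I_sym by blast
    then show "nh (step S a) b = m" using nh_insert_indep Cons.prems(4) b by (simp add: step_def)
  qed
  moreover have "clique I (set xs)" using Cons.prems(2) unfolding clique_def by auto
  moreover have "finite (step S a)" using Cons.prems(3) by (simp add: step_def)
  ultimately have "foldl step (step S a) xs = step S a \<union> (\<lambda>a. (a, m)) ` set xs"
    using Cons.IH Cons.prems(1) by simp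
  moreover have "step S a = insert (a, m) S" using Cons.prems(4) by (simp add: step_def)
  ultimately have "foldl step S (a # xs) = insert (a, m) S \<union> (\<lambda>a. (a, m)) ` set xs" by simp
  then show ?case by auto
qed

lemma Mbar_clique: "\<xi> \<in> Mbar I \<Longrightarrow> clique I (\<xi> n)" by (simp add: Mbar_def)
lemma Mbar_arrow: "\<xi> \<in> Mbar I \<Longrightarrow> arrow I (\<xi> n) (\<xi> (Suc n))" by (simp add: Mbar_def)

lemma pcs_cws: "\<xi> \<in> Mbar I \<Longrightarrow> pcs (cws \<xi> n) = Pc \<xi> n"
proof (induction n)
  case 0 then show ?case by (simp add: Pc_def)
next
  case (Suc n)
  have nh: "\<forall>a\<in>\<xi> n. nh (Pc \<xi> n) a = Suc n"
  proof
    fix a assume a: "a \<in> \<xi> n"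
    have le: "nh (Pc \<xi> n) a \<le> Suc n"
      by (rule nh_le) (auto simp: finite_Pc, auto simp: Pc_def)
    have ge: "Suc n \<le> nh (Pc \<xi> n) a"
    proof (cases n)
      case 0 then show ?thesis using nh_pos by (simp add: Suc_le_eq)
    next
      case (Suc n')
      then obtain c where c: "c \<in> \<xi> n'" "(c, a) \<notin> I"
        using Mbar_arrow[OF Suc.prems, of n'] a unfolding arrow_def by auto
      have "(a, c) \<notin> I" using c(2) I_sym by blast
      moreover have "(c, Suc n') \<in> Pc \<xi> n" using c(1) Suc by (auto simp: Pc_def)
      ultimately have "Suc n' < nh (Pc \<xi> n) a" using nh_gt[OF finite_Pc] by blast
      then show ?thesis using Suc by simp
    qed
    show "nh (Pc \<xi> n) a = Suc n" using le ge by simp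
  qed
  have "pcs (cws \<xi> (Suc n)) = foldl step (Pc \<xi> n) (clique_word (\<xi> n))"
    using Suc.IH[OF Suc.prems] by (simp add: cws_Suc pcs_append)
  also have "\<dots> = Pc \<xi> n \<union> (\<lambda>a. (a, Suc n)) ` \<xi> n"
    using foldl_clique[of "clique_word (\<xi> n)" "Pc \<xi> n" "Suc n"] clique_word[of "\<xi> n"]
      Mbar_clique[OF Suc.prems, of n] nh finite_Pc by simp
  also have "\<dots> = Pc \<xi> (Suc n)" by (auto simp: Pc_def less_Suc_eq)
  finally show ?case .
qed

lemma Mbar_empty_mono: "\<xi> \<in> Mbar I \<Longrightarrow> \<xi> n = {} \<Longrightarrow> n \<le> m \<Longrightarrow> \<xi> m = {}"
proof (induction m)
  case 0 then show ?case by simp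
next
  case (Suc m)
  show ?case
  proof (cases "n = Suc m")
    case True then show ?thesis using Suc.prems by simp
  next
    case False
    then have "\<xi> m = {}" using Suc by simp
    then show ?thesis using Mbar_arrow[OF Suc.prems(1), of m] unfolding arrow_def by auto
  qed
qed

definition lv :: "'a list \<Rightarrow> 'a gheap" where
  "lv w = (\<lambda>k. {a. (a, Suc k) \<in> pcs w})"

lemma lv_Mbar: "lv w \<in> Mbar I"
  unfolding Mbar_def
proof (intro CollectI allI conjI)
  fix n
  show "clique I (lv w n)"
    unfolding clique_def lv_def
  proof (intro ballI impI)
    fix a b assume a: "a \<in> {a. (a, Suc n) \<in> pcs w}" and b: "b \<in> {a. (a, Suc n) \<in> pcs w}" and ab: "a \<noteq> b"
    show "(a, b) \<in> I"
      using pcs_dep_neq[of a "Suc n" w b "Suc n"] a b ab by auto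
  qed
  show "arrow I (lv w n) (lv w (Suc n))"
    unfolding arrow_def lv_def
  proof
    fix b assume b: "b \<in> {a. (a, Suc (Suc n)) \<in> pcs w}"
    then obtain a where "(a, Suc n) \<in> pcs w" "(b, a) \<notin> I" using pcs_down[of b "Suc (Suc n)" w] by auto
    then show "\<exists>a\<in>{a. (a, Suc n) \<in> pcs w}. (a, b) \<notin> I" using I_sym by blast
  qed
qed

lemma Pg_lv: "Pg (lv w) = pcs w"
proof
  show "Pg (lv w) \<subseteq> pcs w" by (auto simp: Pg_def lv_def)
next
  show "pcs w \<subseteq> Pg (lv w)"
  proof
    fix p assume p: "p \<in> pcs w"
    then obtain a k where "p = (a, Suc k)" using pcs_pos[OF p] by (cases p; cases "snd p") auto
    then show "p \<in> Pg (lv w)" using p by (auto simp: Pg_def lv_def)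
  qed
qed

lemma lv_empty: "length w \<le> k \<Longrightarrow> lv w k = {}"
  using pcs_le_len[of _ w] by (fastforce simp: lv_def)

lemma Pc_lv: "length w \<le> n \<Longrightarrow> Pc (lv w) n = pcs w"
  using Pc_Pg[of "lv w" n] Pg_lv[of w] pcs_le_len[of _ w] by (force intro: le_trans)

lemma eqv_cws_lv: "length w \<le> n \<Longrightarrow> eqv w (cws (lv w) n)"
  using pcs_complete Pc_lv pcs_cws[OF lv_Mbar] by metis

lemma heap_eq: "heap I u = heap I v \<longleftrightarrow> eqv u v"
proof
  assume "heap I u = heap I v"
  then have "u \<in> heap I v" by (auto simp: heap_def)
  then show "eqv u v" by (auto simp: heap_def intro: eqv_sym)
next
  assume e: "eqv u v"
  show "heap I u = heap I v"
    unfolding heap_def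
  proof (rule Collect_cong)
    fix x show "eqv u x \<longleftrightarrow> eqv v x" using e eqv_sym[OF e] by (meson rtranclp_trans)
  qed
qed

lemma heap_rep: "eqv w (SOME u. u \<in> heap I w)"
proof -
  have "w \<in> heap I w" by (simp add: heap_def)
  then have "(SOME u. u \<in> heap I w) \<in> heap I w" by (rule someI)
  then show ?thesis by (simp add: heap_def)
qed

lemma hmul_heap: "hmul I (heap I u) (heap I v) = heap I (u @ v)"
  unfolding hmul_def heap_eq using eqv_app[OF heap_rep heap_rep, of u v] eqv_sym by blast

lemma heaps_heap[simp]: "heap I w \<in> heaps I" by (simp add: heaps_def)

lemma heaps_E: "x \<in> heaps I \<Longrightarrow> (\<And>w. x = heap I w \<Longrightarrow> P) \<Longrightarrow> P"
  by (auto simp: heaps_def)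

lemma hle_heap: "hle I (heap I u) (heap I w) \<longleftrightarrow> clsd (pcs u) (pcs w)"
proof -
  have "hle I (heap I u) (heap I w) \<longleftrightarrow> (\<exists>z. heap I w = heap I (u @ z))"
    unfolding hle_def heaps_def using hmul_heap by auto
  also have "\<dots> \<longleftrightarrow> (\<exists>z. eqv w (u @ z))" using heap_eq by simp
  finally show ?thesis using prefix_iff by simp
qed

lemma lv_cws: "\<xi> \<in> Mbar I \<Longrightarrow> \<xi> n = {} \<Longrightarrow> lv (cws \<xi> n) = \<xi>"
proof (rule ext, rule set_eqI)
  fix k a assume M: "\<xi> \<in> Mbar I" and e: "\<xi> n = {}"
  have "a \<in> lv (cws \<xi> n) k \<longleftrightarrow> a \<in> \<xi> k \<and> k < n"
    using pcs_cws[OF M] by (auto simp: lv_def Pc_def)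
  also have "\<dots> \<longleftrightarrow> a \<in> \<xi> k" using Mbar_empty_mono[OF M e, of k] by (cases "k < n") auto
  finally show "a \<in> lv (cws \<xi> n) k \<longleftrightarrow> a \<in> \<xi> k" .
qed

lemma cf_heap: "cf I (heap I w) = lv w"
  unfolding cf_def
proof (rule the_equality)
  show "lv w \<in> Mbar I \<and> (\<exists>n. lv w n = {} \<and> pre I (lv w) n = heap I w)"
    using lv_Mbar lv_empty[of w "length w"] eqv_cws_lv[of w "length w"] heap_eq pre_cws
    by (metis eqv_sym order_refl)
next
  fix \<xi> assume h: "\<xi> \<in> Mbar I \<and> (\<exists>n. \<xi> n = {} \<and> pre I \<xi> n = heap I w)"
  then obtain n where n: "\<xi> n = {}" "heap I (cws \<xi> n) = heap I w" using pre_cws by metis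
  then have "pcs (cws \<xi> n) = pcs w" using heap_eq pcs_eqv by blast
  then have "lv (cws \<xi> n) = lv w" unfolding lv_def by simp
  then show "\<xi> = lv w" using lv_cws[of \<xi> n] h n(1) by simp
qed

lemma cf_fin: "\<xi> \<in> Mfin I \<Longrightarrow> cf I (fin I \<xi>) = \<xi>"
proof -
  assume "\<xi> \<in> Mfin I"
  then have M: "\<xi> \<in> Mbar I" and ex: "\<exists>n. \<xi> n = {}" by (auto simp: Mfin_def)
  let ?n = "LEAST n. \<xi> n = {}"
  have "\<xi> ?n = {}" using ex by (rule LeastI_ex)
  then show ?thesis unfolding fin_def pre_cws cf_heap using lv_cws[OF M] by simp
qed

lemma fin_heaps: "fin I \<xi> \<in> heaps I" by (simp add: fin_def pre_def)

lemma clsd_trunc: "clsd S T \<longleftrightarrow> (\<forall>n. clsd {p\<in>S. snd p \<le> n} {p\<in>T. snd p \<le> n})"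
proof
  assume "clsd S T" then show "\<forall>n. clsd {p\<in>S. snd p \<le> n} {p\<in>T. snd p \<le> n}"
    unfolding clsd_def by auto
next
  assume h: "\<forall>n. clsd {p\<in>S. snd p \<le> n} {p\<in>T. snd p \<le> n}"
  show "clsd S T" unfolding clsd_def
  proof (intro conjI allI impI)
    show "S \<subseteq> T"
    proof
      fix p assume "p \<in> S"
      then show "p \<in> T" using h[rule_format, of "snd p"] unfolding clsd_def by blast
    qed
  next
    fix a i b j assume r: "(a, i) \<in> S" "(b, j) \<in> T" "(a, b) \<notin> I" "j < i"
    have "(a, i) \<in> {p\<in>S. snd p \<le> i}" "(b, j) \<in> {p\<in>T. snd p \<le> i}" using r by auto
    then have "(b, j) \<in> {p\<in>S. snd p \<le> i}" using h[rule_format, of i] r(3,4) unfolding clsd_def by blast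
    then show "(b, j) \<in> S" by simp
  qed
qed

lemma gle_iff: "\<xi> \<in> Mbar I \<Longrightarrow> \<eta> \<in> Mbar I \<Longrightarrow> gle I \<xi> \<eta> \<longleftrightarrow> clsd (Pg \<xi>) (Pg \<eta>)"
proof -
  assume M: "\<xi> \<in> Mbar I" "\<eta> \<in> Mbar I"
  have "gle I \<xi> \<eta> \<longleftrightarrow> (\<forall>n. clsd (Pc \<xi> n) (Pc \<eta> n))"
    unfolding gle_def pre_cws hle_heap pcs_cws[OF M(1)] pcs_cws[OF M(2)] ..
  also have "\<dots> \<longleftrightarrow> clsd (Pg \<xi>) (Pg \<eta>)" unfolding Pc_Pg clsd_trunc[of "Pg \<xi>"] ..
  finally show ?thesis .
qed

lemma boundary_Mbar: "\<xi> \<in> boundary I \<Longrightarrow> \<xi> \<in> Mbar I" by (simp add: boundary_def)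

lemma up_heap: "up I (heap I w) = {\<xi> \<in> boundary I. clsd (pcs w) (Pg \<xi>)}"
  unfolding up_def cf_heap using gle_iff[OF lv_Mbar boundary_Mbar] Pg_lv by auto

lemma Pg_inj: "Pg \<xi> = Pg \<eta> \<Longrightarrow> \<xi> = \<eta>"
proof (rule ext, rule set_eqI)
  fix k a assume "Pg \<xi> = Pg \<eta>"
  then have "(a, Suc k) \<in> Pg \<xi> \<longleftrightarrow> (a, Suc k) \<in> Pg \<eta>" by simp
  then show "a \<in> \<xi> k \<longleftrightarrow> a \<in> \<eta> k" by (auto simp: Pg_def)
qed

lemma Pg_UN: "\<xi> \<in> Mbar I \<Longrightarrow> Pg \<xi> = (\<Union>n. pcs (cws \<xi> n))"
proof -
  assume M: "\<xi> \<in> Mbar I"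
  have "Pg \<xi> = (\<Union>n. Pc \<xi> n)" by (auto simp: Pg_def Pc_def)
  then show ?thesis using pcs_cws[OF M] by simp
qed

definition chn :: "(nat \<Rightarrow> 'a list) \<Rightarrow> bool" where
  "chn h \<longleftrightarrow> (\<forall>m. clsd (pcs (h m)) (pcs (h (Suc m))))"

lemma chn_mono: "chn h \<Longrightarrow> m \<le> m' \<Longrightarrow> clsd (pcs (h m)) (pcs (h m'))"
proof (induction m')
  case 0 then show ?case by (simp add: clsd_refl)
next
  case (Suc m')
  show ?case
  proof (cases "m = Suc m'")
    case True then show ?thesis by (simp add: clsd_refl)
  next
    case False
    then have "clsd (pcs (h m)) (pcs (h m'))" using Suc by simp
    then show ?thesis using Suc.prems(1) clsd_trans unfolding chn_def by blast
  qed
qed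

lemma chn_sub: "chn h \<Longrightarrow> m \<le> m' \<Longrightarrow> pcs (h m) \<subseteq> pcs (h m')"
  using chn_mono unfolding clsd_def by blast

lemma chn_U: "chn h \<Longrightarrow> clsd (pcs (h m)) (\<Union>n. pcs (h n))"
  unfolding clsd_def
proof (intro conjI allI impI)
  show "pcs (h m) \<subseteq> (\<Union>n. pcs (h n))" by blast
next
  fix a i b j assume c: "chn h" and r: "(a, i) \<in> pcs (h m)" "(b, j) \<in> (\<Union>n. pcs (h n))" "(a, b) \<notin> I" "j < i"
  then obtain n where n: "(b, j) \<in> pcs (h n)" by blast
  have "(b, j) \<in> pcs (h (max m n))" using chn_sub[OF c, of n "max m n"] n by auto
  moreover have "clsd (pcs (h m)) (pcs (h (max m n)))" using chn_mono[OF c] by simp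
  ultimately show "(b, j) \<in> pcs (h m)" using r unfolding clsd_def by blast
qed

lemma chn_fin: "finite S \<Longrightarrow> chn h \<Longrightarrow> S \<subseteq> (\<Union>n. pcs (h n)) \<Longrightarrow> \<exists>m. S \<subseteq> pcs (h m)"
proof (induction S rule: finite_induct)
  case empty then show ?case by simp
next
  case (insert x S)
  then obtain m1 where m1: "S \<subseteq> pcs (h m1)" by auto
  obtain m2 where m2: "x \<in> pcs (h m2)" using insert.prems by auto
  have "pcs (h m1) \<subseteq> pcs (h (max m1 m2))" "pcs (h m2) \<subseteq> pcs (h (max m1 m2))"
    using chn_sub[OF insert.prems(1)] by auto
  then show ?case using m1 m2 by blast
qed

lemma chn_clsd_iff: "chn h \<Longrightarrow> finite S \<Longrightarrow> clsd S (\<Union>n. pcs (h n)) \<longleftrightarrow> (\<exists>m. clsd S (pcs (h m)))"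
proof
  assume c: "chn h" "finite S" "clsd S (\<Union>n. pcs (h n))"
  have "S \<subseteq> (\<Union>n. pcs (h n))" using c(3) unfolding clsd_def by blast
  then obtain m where m: "S \<subseteq> pcs (h m)" using chn_fin[OF c(2,1)] by blast
  have "pcs (h m) \<subseteq> (\<Union>n. pcs (h n))" by blast
  then show "\<exists>m. clsd S (pcs (h m))" using clsd_sub[OF c(3) m] by blast
next
  assume c: "chn h" "finite S" and "\<exists>m. clsd S (pcs (h m))"
  then obtain m where "clsd S (pcs (h m))" by blast
  then show "clsd S (\<Union>n. pcs (h n))" using chn_U[OF c(1), of m] clsd_trans by blast
qed

definition lim :: "(nat \<Rightarrow> 'a list) \<Rightarrow> 'a gheap" where
  "lim h = (\<lambda>k. {a. \<exists>m. (a, Suc k) \<in> pcs (h m)})"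

lemma Pg_lim: "Pg (lim h) = (\<Union>n. pcs (h n))"
proof
  show "Pg (lim h) \<subseteq> (\<Union>n. pcs (h n))" by (auto simp: Pg_def lim_def)
next
  show "(\<Union>n. pcs (h n)) \<subseteq> Pg (lim h)"
  proof
    fix p assume "p \<in> (\<Union>n. pcs (h n))"
    then obtain n where p: "p \<in> pcs (h n)" by blast
    then obtain a k where "p = (a, Suc k)" using pcs_pos[OF p] by (cases p; cases "snd p") auto
    then show "p \<in> Pg (lim h)" using p by (auto simp: Pg_def lim_def)
  qed
qed

lemma lim_Mbar: "chn h \<Longrightarrow> lim h \<in> Mbar I"
  unfolding Mbar_def
proof (intro CollectI allI conjI)
  fix n assume c: "chn h"
  show "clique I (lim h n)"
    unfolding clique_def
  proof (intro ballI impI)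
    fix a b assume a: "a \<in> lim h n" and b: "b \<in> lim h n" and ab: "a \<noteq> b"
    obtain m1 m2 where "(a, Suc n) \<in> pcs (h m1)" "(b, Suc n) \<in> pcs (h m2)" using a b by (auto simp: lim_def)
    then have "a \<in> lv (h (max m1 m2)) n" "b \<in> lv (h (max m1 m2)) n"
      using chn_sub[OF c, of m1 "max m1 m2"] chn_sub[OF c, of m2 "max m1 m2"] by (auto simp: lv_def)
    then show "(a, b) \<in> I" using Mbar_clique[OF lv_Mbar] ab unfolding clique_def by blast
  qed
  show "arrow I (lim h n) (lim h (Suc n))"
    unfolding arrow_def
  proof
    fix b assume "b \<in> lim h (Suc n)"
    then obtain m where "b \<in> lv (h m) (Suc n)" by (auto simp: lim_def lv_def)
    then obtain a where "a \<in> lv (h m) n" "(a, b) \<notin> I" using Mbar_arrow[OF lv_Mbar, of "h m" n] unfolding arrow_def by blast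
    then show "\<exists>a\<in>lim h n. (a, b) \<notin> I" by (auto simp: lim_def lv_def)
  qed
qed

lemma lv_nonempty: "k * CARD('a) < length w \<Longrightarrow> lv w k \<noteq> {}"
proof
  assume l: "k * CARD('a) < length w" and e: "lv w k = {}"
  have "pcs w \<subseteq> UNIV \<times> {1..k}"
  proof
    fix p assume p: "p \<in> pcs w"
    then obtain a k' where ak: "p = (a, Suc k')" using pcs_pos[OF p] by (cases p; cases "snd p") auto
    have "k' < k"
    proof (rule ccontr)
      assume "\<not> k' < k"
      then have "lv w k' = {}" using Mbar_empty_mono[OF lv_Mbar e] by simp
      then show False using p ak by (auto simp: lv_def)
    qed
    then show "p \<in> UNIV \<times> {1..k}" using ak by auto
  qed
  then have "card (pcs w) \<le> card (UNIV \<times> {1..k} :: ('a \<times> nat) set)"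
    by (intro card_mono) auto
  also have "\<dots> = CARD('a) * k" by (simp add: card_cartesian_product)
  finally show False using l card_pcs by (simp add: mult.commute)
qed

lemma lim_boundary: "chn h \<Longrightarrow> (\<forall>N. \<exists>m. N \<le> length (h m)) \<Longrightarrow> lim h \<in> boundary I"
  unfolding boundary_def
proof (intro CollectI conjI allI)
  assume c: "chn h" and u: "\<forall>N. \<exists>m. N \<le> length (h m)"
  show "lim h \<in> Mbar I" using lim_Mbar[OF c] .
  fix k
  obtain m where "Suc (k * CARD('a)) \<le> length (h m)" using u by blast
  then have "lv (h m) k \<noteq> {}" using lv_nonempty by simp
  then show "lim h k \<noteq> {}" by (auto simp: lim_def lv_def)
qed

end

context hp begin

lemma chn_cws: "\<xi> \<in> Mbar I \<Longrightarrow> chn (cws \<xi>)"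
  unfolding chn_def using prefix_clsd by (simp add: cws_Suc)

lemma chn_app: "chn (\<lambda>n. u @ cws \<xi> n)"
  unfolding chn_def using prefix_clsd by (metis append_assoc cws_Suc)

lemma length_cws: "\<xi> \<in> boundary I \<Longrightarrow> n \<le> length (cws \<xi> n)"
proof (induction n)
  case 0 then show ?case by simp
next
  case (Suc n)
  have "\<xi> n \<noteq> {}" using Suc.prems by (simp add: boundary_def)
  then have "clique_word (\<xi> n) \<noteq> []" using clique_word[of "\<xi> n"] by auto
  then show ?case using Suc by (simp add: cws_Suc) (metis Suc_leI add_le_less_mono length_greater_0_conv add_0_right)
qed

lemma glub_lim: "chn h \<Longrightarrow> glub I (\<lambda>n. lv (h n)) = lim h"
  unfolding glub_def
proof (rule the_equality)
  assume c: "chn h"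
  have M: "lim h \<in> Mbar I" using lim_Mbar[OF c] .
  show "lim h \<in> Mbar I \<and> (\<forall>n. gle I (lv (h n)) (lim h)) \<and>
    (\<forall>\<zeta>'\<in>Mbar I. (\<forall>n. gle I (lv (h n)) \<zeta>') \<longrightarrow> gle I (lim h) \<zeta>')"
  proof (intro conjI allI ballI impI)
    show "lim h \<in> Mbar I" using M .
    fix n show "gle I (lv (h n)) (lim h)"
      using gle_iff[OF lv_Mbar M] Pg_lv Pg_lim chn_U[OF c] by simp
  next
    fix \<zeta>' assume M': "\<zeta>' \<in> Mbar I" and a: "\<forall>n. gle I (lv (h n)) \<zeta>'"
    then have "\<forall>n. clsd (pcs (h n)) (Pg \<zeta>')" using gle_iff[OF lv_Mbar M'] Pg_lv by simp
    then have "clsd (\<Union>n. pcs (h n)) (Pg \<zeta>')" using clsd_UN[of UNIV "\<lambda>n. pcs (h n)"] by simp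
    then show "gle I (lim h) \<zeta>'" using gle_iff[OF M M'] Pg_lim by simp
  qed
next
  fix \<zeta> assume c: "chn h" and h: "\<zeta> \<in> Mbar I \<and> (\<forall>n. gle I (lv (h n)) \<zeta>) \<and>
    (\<forall>\<zeta>'\<in>Mbar I. (\<forall>n. gle I (lv (h n)) \<zeta>') \<longrightarrow> gle I \<zeta> \<zeta>')"
  have M: "lim h \<in> Mbar I" using lim_Mbar[OF c] .
  have "\<forall>n. gle I (lv (h n)) (lim h)"
    using gle_iff[OF lv_Mbar M] Pg_lv Pg_lim chn_U[OF c] by simp
  then have g1: "gle I \<zeta> (lim h)" using h M by blast
  have "\<forall>n. clsd (pcs (h n)) (Pg \<zeta>)" using h gle_iff[OF lv_Mbar, of \<zeta>] Pg_lv by auto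
  then have "clsd (\<Union>n. pcs (h n)) (Pg \<zeta>)" using clsd_UN[of UNIV "\<lambda>n. pcs (h n)"] by simp
  then have "clsd (Pg (lim h)) (Pg \<zeta>)" using Pg_lim by simp
  moreover have "clsd (Pg \<zeta>) (Pg (lim h))" using g1 gle_iff[OF _ M] h by simp
  ultimately show "\<zeta> = lim h" using clsd_antisym Pg_inj by metis
qed

lemma act_eq: "act I (heap I u) \<zeta> = lim (\<lambda>n. u @ cws \<zeta> n)"
proof -
  have "(\<lambda>n. cf I (hmul I (heap I u) (pre I \<zeta> n))) = (\<lambda>n. lv (u @ cws \<zeta> n))"
    by (simp add: pre_cws hmul_heap cf_heap)
  then show ?thesis unfolding act_def using glub_lim[OF chn_app] by simp
qed

lemma Pg_act: "Pg (act I (heap I u) \<zeta>) = (\<Union>n. pcs (u @ cws \<zeta> n))"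
  using act_eq Pg_lim by simp

lemma act_boundary: "\<zeta> \<in> boundary I \<Longrightarrow> act I (heap I u) \<zeta> \<in> boundary I"
proof -
  assume b: "\<zeta> \<in> boundary I"
  have "\<forall>N. \<exists>m. N \<le> length (u @ cws \<zeta> m)"
    using length_cws[OF b] by (metis le_add2 le_trans length_append)
  then show ?thesis using act_eq lim_boundary[OF chn_app] by simp
qed

lemma up_iff_ex: "\<xi> \<in> boundary I \<Longrightarrow> \<xi> \<in> up I (heap I w) \<longleftrightarrow> (\<exists>m. clsd (pcs w) (pcs (cws \<xi> m)))"
  using up_heap Pg_UN[OF boundary_Mbar] chn_clsd_iff[OF chn_cws[OF boundary_Mbar] finite_pcs] by simp

lemma up_act_iff: "\<zeta> \<in> boundary I \<Longrightarrow>
  act I (heap I u) \<zeta> \<in> up I (heap I w) \<longleftrightarrow> (\<exists>m. clsd (pcs w) (pcs (u @ cws \<zeta> m)))"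
  using up_heap[of w] act_boundary Pg_act chn_clsd_iff[OF chn_app finite_pcs] by simp

lemma F3: "\<zeta> \<in> boundary I \<Longrightarrow>
  act I (heap I u) \<zeta> \<in> up I (heap I (u @ v)) \<longleftrightarrow> \<zeta> \<in> up I (heap I v)"
proof -
  assume b: "\<zeta> \<in> boundary I"
  have "act I (heap I u) \<zeta> \<in> up I (heap I (u @ v)) \<longleftrightarrow> (\<exists>m z. eqv (u @ cws \<zeta> m) ((u @ v) @ z))"
    by (simp only: up_act_iff[OF b] prefix_iff[symmetric])
  also have "\<dots> \<longleftrightarrow> (\<exists>m z. eqv (cws \<zeta> m) (v @ z))"
  proof
    assume "\<exists>m z. eqv (u @ cws \<zeta> m) ((u @ v) @ z)"
    then show "\<exists>m z. eqv (cws \<zeta> m) (v @ z)" using eqv_cancel_left by fastforce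
  next
    assume "\<exists>m z. eqv (cws \<zeta> m) (v @ z)"
    then obtain m z where "eqv (cws \<zeta> m) (v @ z)" by blast
    then have "eqv (u @ cws \<zeta> m) ((u @ v) @ z)" using eqv_app[of u u "cws \<zeta> m" "v @ z"] by simp
    then show "\<exists>m z. eqv (u @ cws \<zeta> m) ((u @ v) @ z)" by blast
  qed
  also have "\<dots> \<longleftrightarrow> \<zeta> \<in> up I (heap I v)" by (simp only: up_iff_ex[OF b] prefix_iff[symmetric])
  finally show ?thesis .
qed

lemma up_Nil: "up I (heap I []) = boundary I"
  using up_heap[of "[]"] by (simp add: clsd_def)

lemma act_in_up: "\<zeta> \<in> boundary I \<Longrightarrow> act I (heap I u) \<zeta> \<in> up I (heap I u)"
  using F3[of \<zeta> u "[]"] up_Nil by simp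

lemma in_up_self: "\<xi> \<in> boundary I \<Longrightarrow> \<xi> \<in> up I (heap I (cws \<xi> n))"
  using up_iff_ex clsd_refl by blast

lemma up_sub_Pg: "\<xi> \<in> up I (heap I w) \<Longrightarrow> pcs w \<subseteq> Pg \<xi>"
  using up_heap unfolding clsd_def by blast

lemma act_inj:
  assumes b: "\<zeta> \<in> boundary I" "\<zeta>' \<in> boundary I" and e: "act I (heap I u) \<zeta> = act I (heap I u) \<zeta>'"
  shows "\<zeta> = \<zeta>'"
proof -
  have iff: "\<And>v. \<zeta> \<in> up I (heap I v) \<longleftrightarrow> \<zeta>' \<in> up I (heap I v)"
    using F3[OF b(1)] F3[OF b(2)] e by metis
  have "Pg \<zeta> \<subseteq> Pg \<zeta>'"
  proof -
    have "\<And>n. pcs (cws \<zeta> n) \<subseteq> Pg \<zeta>'" using iff in_up_self[OF b(1)] up_sub_Pg by blast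
    then show ?thesis using Pg_UN[OF boundary_Mbar[OF b(1)]] by blast
  qed
  moreover have "Pg \<zeta>' \<subseteq> Pg \<zeta>"
  proof -
    have "\<And>n. pcs (cws \<zeta>' n) \<subseteq> Pg \<zeta>" using iff in_up_self[OF b(2)] up_sub_Pg by blast
    then show ?thesis using Pg_UN[OF boundary_Mbar[OF b(2)]] by blast
  qed
  ultimately show ?thesis using Pg_inj by blast
qed

lemma clsd_pcs_app: "clsd (pcs a) (pcs b) \<Longrightarrow> pcs (u @ a) \<subseteq> pcs (u @ b)"
proof -
  assume "clsd (pcs a) (pcs b)"
  then obtain z where "eqv b (a @ z)" using prefix_iff by blast
  then have "eqv (u @ b) ((u @ a) @ z)" using eqv_app[of u u b "a @ z"] by simp
  then show ?thesis using pcs_eqv pcs_mono by metis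
qed

lemma act_surj:
  assumes xi: "\<xi> \<in> up I (heap I u)"
  shows "\<exists>\<zeta>\<in>boundary I. act I (heap I u) \<zeta> = \<xi>"
proof -
  have b: "\<xi> \<in> boundary I" using xi by (simp add: up_def)
  have M: "\<xi> \<in> Mbar I" using boundary_Mbar[OF b] .
  obtain m0 where m0: "clsd (pcs u) (pcs (cws \<xi> m0))" using up_iff_ex[OF b] xi by blast
  have ex: "\<And>n. \<exists>z. eqv (cws \<xi> (n + m0)) (u @ z)"
  proof -
    fix n
    have "clsd (pcs u) (pcs (cws \<xi> (n + m0)))"
      using m0 chn_mono[OF chn_cws[OF M], of m0 "n + m0"] clsd_trans by simp
    then show "\<exists>z. eqv (cws \<xi> (n + m0)) (u @ z)" using prefix_iff by blast
  qed
  define h where "h n = (SOME z. eqv (cws \<xi> (n + m0)) (u @ z))" for n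
  have hz: "\<And>n. eqv (cws \<xi> (n + m0)) (u @ h n)" unfolding h_def using ex by (rule someI_ex)
  have ch: "chn h"
    unfolding chn_def
  proof
    fix n
    have "eqv (u @ h (Suc n)) (cws \<xi> (Suc n + m0))" using hz eqv_sym by blast
    also have "cws \<xi> (Suc n + m0) = cws \<xi> (n + m0) @ clique_word (\<xi> (n + m0))" by (simp add: cws_Suc)
    finally have "eqv (u @ h (Suc n)) (cws \<xi> (n + m0) @ clique_word (\<xi> (n + m0)))" .
    moreover have "eqv (cws \<xi> (n + m0) @ clique_word (\<xi> (n + m0))) ((u @ h n) @ clique_word (\<xi> (n + m0)))"
      using eqv_app[OF hz] by blast
    ultimately have "eqv (u @ h (Suc n)) (u @ h n @ clique_word (\<xi> (n + m0)))" by simp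
    then have "eqv (h (Suc n)) (h n @ clique_word (\<xi> (n + m0)))" by (rule eqv_cancel_left)
    then show "clsd (pcs (h n)) (pcs (h (Suc n)))" by (rule clsd_eqv)
  qed
  have unb: "\<forall>N. \<exists>m. N \<le> length (h m)"
  proof
    fix N
    have "N + length u \<le> length (cws \<xi> (N + length u + m0))" using length_cws[OF b] by (meson le_add1 le_trans)
    also have "\<dots> = length u + length (h (N + length u))" using eqv_length[OF hz] by simp
    finally show "\<exists>m. N \<le> length (h m)" by auto
  qed
  define \<zeta> where "\<zeta> = lim h"
  have zb: "\<zeta> \<in> boundary I" using lim_boundary[OF ch unb] \<zeta>_def by simp
  have PgZ: "Pg \<zeta> = (\<Union>n. pcs (h n))" using Pg_lim \<zeta>_def by simp
  have "Pg (act I (heap I u) \<zeta>) = Pg \<xi>"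
  proof
    show "Pg (act I (heap I u) \<zeta>) \<subseteq> Pg \<xi>"
    proof
      fix p assume "p \<in> Pg (act I (heap I u) \<zeta>)"
      then obtain m where p: "p \<in> pcs (u @ cws \<zeta> m)" using Pg_act by blast
      have "clsd (pcs (cws \<zeta> m)) (Pg \<zeta>)" using in_up_self[OF zb] up_heap by blast
      then obtain n where "clsd (pcs (cws \<zeta> m)) (pcs (h n))"
        using chn_clsd_iff[OF ch finite_pcs] PgZ by auto
      then have "p \<in> pcs (u @ h n)" using clsd_pcs_app p by blast
      then have "p \<in> pcs (cws \<xi> (n + m0))" using pcs_eqv[OF hz] by simp
      then show "p \<in> Pg \<xi>" using Pg_UN[OF M] by blast
    qed
  next
    show "Pg \<xi> \<subseteq> Pg (act I (heap I u) \<zeta>)"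
    proof
      fix p assume "p \<in> Pg \<xi>"
      then obtain n where "p \<in> pcs (cws \<xi> n)" using Pg_UN[OF M] by blast
      then have "p \<in> pcs (cws \<xi> (n + m0))" using chn_sub[OF chn_cws[OF M], of n "n + m0"] by auto
      then have p: "p \<in> pcs (u @ h n)" using pcs_eqv[OF hz] by simp
      have "clsd (pcs (h n)) (Pg \<zeta>)" using chn_U[OF ch] PgZ by simp
      then obtain m where "clsd (pcs (h n)) (pcs (cws \<zeta> m))"
        using up_iff_ex[OF zb] up_heap zb by blast
      then have "p \<in> pcs (u @ cws \<zeta> m)" using clsd_pcs_app p by blast
      then show "p \<in> Pg (act I (heap I u) \<zeta>)" using Pg_act by blast
    qed
  qed
  then show ?thesis using Pg_inj zb by blast
qed

lemma minus_heap_prop: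
  assumes "\<xi> \<in> up I (heap I u)"
  shows "minus_heap I \<xi> (heap I u) \<in> boundary I \<and> act I (heap I u) (minus_heap I \<xi> (heap I u)) = \<xi>"
proof -
  obtain \<zeta> where z: "\<zeta> \<in> boundary I" "act I (heap I u) \<zeta> = \<xi>" using act_surj[OF assms] by blast
  have "\<exists>!\<zeta>. \<zeta> \<in> boundary I \<and> act I (heap I u) \<zeta> = \<xi>"
    using z act_inj by blast
  then show ?thesis unfolding minus_heap_def by (rule theI')
qed

lemma minus_act: "\<zeta> \<in> boundary I \<Longrightarrow> minus_heap I (act I (heap I u) \<zeta>) (heap I u) = \<zeta>"
  unfolding minus_heap_def
  by (rule the_equality) (auto intro: act_inj)

lemma up_boundary: "up I x \<subseteq> boundary I" by (auto simp: up_def)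

lemma up_mono: "up I (heap I (u @ v)) \<subseteq> up I (heap I u)"
  unfolding up_heap using prefix_clsd clsd_trans by blast

lemma shift_pre:
  "{\<xi> \<in> up I (heap I u). minus_heap I \<xi> (heap I u) \<in> up I (heap I v)} = up I (heap I (u @ v))"
proof
  show "{\<xi> \<in> up I (heap I u). minus_heap I \<xi> (heap I u) \<in> up I (heap I v)} \<subseteq> up I (heap I (u @ v))"
  proof
    fix \<xi> assume "\<xi> \<in> {\<xi> \<in> up I (heap I u). minus_heap I \<xi> (heap I u) \<in> up I (heap I v)}"
    then have h: "\<xi> \<in> up I (heap I u)" "minus_heap I \<xi> (heap I u) \<in> up I (heap I v)" by auto
    then show "\<xi> \<in> up I (heap I (u @ v))"
      using minus_heap_prop[OF h(1)] F3 by metis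
  qed
next
  show "up I (heap I (u @ v)) \<subseteq> {\<xi> \<in> up I (heap I u). minus_heap I \<xi> (heap I u) \<in> up I (heap I v)}"
  proof
    fix \<xi> assume h: "\<xi> \<in> up I (heap I (u @ v))"
    then have h1: "\<xi> \<in> up I (heap I u)" using up_mono by blast
    have m: "minus_heap I \<xi> (heap I u) \<in> boundary I" "act I (heap I u) (minus_heap I \<xi> (heap I u)) = \<xi>"
      using minus_heap_prop[OF h1] by auto
    have "minus_heap I \<xi> (heap I u) \<in> up I (heap I v)"
      using F3[OF m(1), of u v] m(2) h by simp
    then show "\<xi> \<in> {\<xi> \<in> up I (heap I u). minus_heap I \<xi> (heap I u) \<in> up I (heap I v)}"
      using h1 by simp
  qed
qed

lemma up_Int:
  "up I (heap I v) \<inter> up I (heap I w) = {} \<or> (\<exists>y. up I (heap I v) \<inter> up I (heap I w) = up I (heap I y))"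
proof (cases "up I (heap I v) \<inter> up I (heap I w) = {}")
  case True then show ?thesis by blast
next
  case False
  then obtain \<xi>0 where x0: "\<xi>0 \<in> up I (heap I v)" "\<xi>0 \<in> up I (heap I w)" by blast
  have b0: "\<xi>0 \<in> boundary I" using x0 up_boundary by blast
  let ?S = "pcs v \<union> pcs w"
  have cv: "clsd (pcs v) (Pg \<xi>0)" and cw: "clsd (pcs w) (Pg \<xi>0)" using x0 up_heap by auto
  have "clsd ?S (Pg \<xi>0)" using clsd_Un[OF cv cw] .
  then obtain m where "clsd ?S (pcs (cws \<xi>0 m))"
    using chn_clsd_iff[OF chn_cws[OF boundary_Mbar[OF b0]]] Pg_UN[OF boundary_Mbar[OF b0]] by auto
  then obtain y z where yz: "pcs y = ?S" using realize by blast
  have S0: "?S \<subseteq> Pg \<xi>0" using cv cw unfolding clsd_def by blast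
  have cvS: "clsd (pcs v) ?S" using clsd_sub[OF cv _ S0] by blast
  have cwS: "clsd (pcs w) ?S" using clsd_sub[OF cw _ S0] by blast
  have "up I (heap I v) \<inter> up I (heap I w) = up I (heap I y)"
    unfolding up_heap yz using clsd_Un clsd_trans cvS cwS by blast
  then show ?thesis by blast
qed

end

context hp begin

lemma up_Pow: "up I ` heaps I \<subseteq> Pow (boundary I)"
  using up_boundary by blast

lemma sets_cyl: "sets (cyl_space I) = sigma_sets (boundary I) (up I ` heaps I)"
  unfolding cyl_space_def using up_Pow by (rule sets_measure_of)

lemma space_cyl: "space (cyl_space I) = boundary I"
  unfolding cyl_space_def using up_Pow by (rule space_measure_of)

lemma heaps_countable: "countable (heaps I)"
  unfolding heaps_def by simp

context
  fixes P assumes bern: "bernoulli I P"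
begin

lemma prob_P: "prob_space P" using bern by (simp add: bernoulli_def)
lemma space_P: "space P = boundary I" using bern by (simp add: bernoulli_def)
lemma sets_P: "sets P = sets (cyl_space I)" using bern by (simp add: bernoulli_def)

lemma up_sets: "x \<in> heaps I \<Longrightarrow> up I x \<in> sets P"
  using sets_P sets_cyl by (auto intro: sigma_sets.Basic)

lemma up_heap_sets[simp]: "up I (heap I w) \<in> sets P"
  by (rule up_sets) simp

lemma bern_mult:
  "emeasure P (up I (heap I (u @ v))) = emeasure P (up I (heap I u)) * emeasure P (up I (heap I v))"
proof -
  interpret prob_space P by (rule prob_P)
  have "measure P (up I (hmul I (heap I u) (heap I v))) = measure P (up I (heap I u)) * measure P (up I (heap I v))"
    using bern by (simp add: bernoulli_def)
  then show ?thesis using hmul_heap emeasure_eq_measure by (simp add: ennreal_mult)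
qed

lemma sigma_insert_empty: "sigma_sets \<Omega> (insert {} G) = sigma_sets \<Omega> G"
proof
  show "sigma_sets \<Omega> (insert {} G) \<subseteq> sigma_sets \<Omega> G"
    by (rule sigma_sets_mono) (auto intro: sigma_sets.Empty sigma_sets.Basic)
  show "sigma_sets \<Omega> G \<subseteq> sigma_sets \<Omega> (insert {} G)"
    by (rule sigma_sets_mono) (auto intro: sigma_sets.Basic)
qed

lemma minus_meas:
  "(\<lambda>\<xi>. minus_heap I \<xi> (heap I u)) \<in> measurable (restrict_space P (up I (heap I u))) (cyl_space I)"
proof -
  let ?x = "heap I u"
  let ?U = "up I ?x"
  let ?m = "\<lambda>\<xi>. minus_heap I \<xi> ?x"
  let ?R = "restrict_space P ?U"
  have U: "?U \<inter> space P \<in> sets P" using space_P up_boundary by (simp add: Int_absorb2)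
  have spR: "space ?R = ?U" using space_P up_boundary by (simp add: space_restrict_space Int_absorb2)
  show ?thesis
    unfolding cyl_space_def
  proof (rule measurable_measure_of[OF up_Pow])
    show "?m \<in> space ?R \<rightarrow> boundary I" using spR minus_heap_prop by auto
  next
    fix y assume "y \<in> up I ` heaps I"
    then obtain v where y: "y = up I (heap I v)" by (auto simp: heaps_def)
    have "?m -` y \<inter> space ?R = up I (heap I (u @ v))"
      using shift_pre[of u v] spR y by auto
    moreover have "up I (heap I (u @ v)) \<subseteq> ?U" using up_mono by blast
    ultimately show "?m -` y \<inter> space ?R \<in> sets ?R"
      using sets_restrict_space_iff[OF U] by simp
  qed
qed

lemma core:
  assumes psi: "\<psi> \<in> borel_measurable (cyl_space I)"
  shows "(\<integral>\<^sup>+\<xi>. ennreal (\<psi> (minus_heap I \<xi> (heap I u))) * indicator (up I (heap I u)) \<xi> \<partial>P)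
       = emeasure P (up I (heap I u)) * (\<integral>\<^sup>+\<xi>. ennreal (\<psi> \<xi>) \<partial>P)"
proof -
  interpret prob_space P by (rule prob_P)
  let ?x = "heap I u"
  let ?U = "up I ?x"
  let ?m = "\<lambda>\<xi>. minus_heap I \<xi> ?x"
  let ?R = "restrict_space P ?U"
  have U: "?U \<inter> space P \<in> sets P" using space_P up_boundary by (simp add: Int_absorb2)
  have spR: "space ?R = ?U" using space_P up_boundary by (simp add: space_restrict_space Int_absorb2)
  have mm: "?m \<in> measurable ?R (cyl_space I)"
    unfolding cyl_space_def
  proof (rule measurable_measure_of[OF up_Pow])
    show "?m \<in> space ?R \<rightarrow> boundary I" using spR minus_heap_prop by auto
  next
    fix y assume "y \<in> up I ` heaps I"
    then obtain v where y: "y = up I (heap I v)" by (auto simp: heaps_def)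
    have "?m -` y \<inter> space ?R = up I (heap I (u @ v))"
      using shift_pre[of u v] spR y by auto
    moreover have "up I (heap I (u @ v)) \<subseteq> ?U" using up_mono by blast
    ultimately show "?m -` y \<inter> space ?R \<in> sets ?R"
      using sets_restrict_space_iff[OF U] by simp
  qed
  have fin: "emeasure P ?U \<noteq> \<infinity>" by simp
  have D: "scale_measure (emeasure P ?U) P = distr ?R (cyl_space I) ?m"
  proof (rule measure_eqI_generator_eq[where \<Omega> = "boundary I" and E = "insert {} (up I ` heaps I)"
        and A = "\<lambda>_. boundary I"])
    show "Int_stable (insert {} (up I ` heaps I))"
    proof (rule Int_stableI)
      fix a b assume a: "a \<in> insert {} (up I ` heaps I)" and b: "b \<in> insert {} (up I ` heaps I)"
      show "a \<inter> b \<in> insert {} (up I ` heaps I)"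
      proof (cases "a = {} \<or> b = {}")
        case True then show ?thesis by auto
      next
        case False
        then obtain v w where "a = up I (heap I v)" "b = up I (heap I w)" using a b by (auto simp: heaps_def)
        then show ?thesis using up_Int[of v w] by (auto simp: heaps_def)
      qed
    qed
  next
    show "insert {} (up I ` heaps I) \<subseteq> Pow (boundary I)" using up_Pow by blast
  next
    fix X assume X: "X \<in> insert {} (up I ` heaps I)"
    show "emeasure (scale_measure (emeasure P ?U) P) X = emeasure (distr ?R (cyl_space I) ?m) X"
    proof (cases "X = {}")
      case True then show ?thesis by simp
    next
      case False
      then obtain v where y: "X = up I (heap I v)" using X by (auto simp: heaps_def)
      have Xs: "X \<in> sets (cyl_space I)" using y up_heap_sets sets_P by simp
      have "emeasure (distr ?R (cyl_space I) ?m) X = emeasure ?R (?m -` X \<inter> space ?R)"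
        by (rule emeasure_distr[OF mm Xs])
      also have "?m -` X \<inter> space ?R = up I (heap I (u @ v))"
        using shift_pre[of u v] spR y by auto
      also have "emeasure ?R (up I (heap I (u @ v))) = emeasure P (up I (heap I (u @ v)))"
        using emeasure_restrict_space[OF U] up_mono by blast
      also have "\<dots> = emeasure P ?U * emeasure P X" using bern_mult y by simp
      finally show ?thesis by simp
    qed
  next
    show "sets (scale_measure (emeasure P ?U) P) = sigma_sets (boundary I) (insert {} (up I ` heaps I))"
      using sets_P sets_cyl sigma_insert_empty[of "boundary I" "up I ` heaps I"] by simp
  next
    show "sets (distr ?R (cyl_space I) ?m) = sigma_sets (boundary I) (insert {} (up I ` heaps I))"
      using sets_cyl sigma_insert_empty[of "boundary I" "up I ` heaps I"] by simp
  next
    show "range (\<lambda>_. boundary I) \<subseteq> insert {} (up I ` heaps I)"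
      using up_Nil by (auto simp: heaps_def)
    show "(\<Union>i. boundary I) = boundary I" by simp
    fix i :: nat
    show "emeasure (scale_measure (emeasure P ?U) P) (boundary I) \<noteq> \<infinity>"
      using fin by (simp add: ennreal_mult_eq_top_iff)
  qed
  have gm: "(\<lambda>\<xi>. ennreal (\<psi> \<xi>)) \<in> borel_measurable (cyl_space I)" using psi by measurable
  have gmP: "(\<lambda>\<xi>. ennreal (\<psi> \<xi>)) \<in> borel_measurable P" using gm measurable_cong_sets[OF sets_P refl] by blast
  have "(\<integral>\<^sup>+\<xi>. ennreal (\<psi> (?m \<xi>)) * indicator ?U \<xi> \<partial>P) = (\<integral>\<^sup>+\<xi>. ennreal (\<psi> (?m \<xi>)) \<partial>?R)"
    using nn_integral_restrict_space[OF U] by simp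
  also have "\<dots> = (\<integral>\<^sup>+\<xi>. ennreal (\<psi> \<xi>) \<partial>(distr ?R (cyl_space I) ?m))"
    by (rule nn_integral_distr[symmetric, OF mm]) (simp add: gm)
  also have "\<dots> = (\<integral>\<^sup>+\<xi>. ennreal (\<psi> \<xi>) \<partial>(scale_measure (emeasure P ?U) P))" using D by simp
  also have "\<dots> = emeasure P ?U * (\<integral>\<^sup>+\<xi>. ennreal (\<psi> \<xi>) \<partial>P)"
    by (rule nn_integral_scale_measure[OF gmP])
  finally show ?thesis .
qed

end
end

context hp begin

context
  fixes P V assumes bern: "bernoulli I P" and ast: "AST I V"
begin

definition Vf where "Vf = {\<xi> \<in> boundary I. V \<xi> \<in> Mfin I}"
definition Gen where "Gen = {up I (fin I (V \<xi>)) | \<xi>. \<xi> \<in> boundary I \<and> V \<xi> \<in> Mfin I}"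

lemma ast1: "\<xi> \<in> boundary I \<Longrightarrow> V \<xi> \<in> Mbar I \<and> gle I (V \<xi>) \<xi>"
  using ast unfolding AST_def by blast

lemma ast2: "\<xi> \<in> boundary I \<Longrightarrow> \<xi>' \<in> boundary I \<Longrightarrow> V \<xi> \<in> Mfin I \<Longrightarrow> gle I (V \<xi>) \<xi>' \<Longrightarrow> V \<xi>' = V \<xi>"
  using ast unfolding AST_def by blast

lemma level: "\<xi>0 \<in> boundary I \<Longrightarrow> V \<xi>0 \<in> Mfin I \<Longrightarrow> up I (fin I (V \<xi>0)) = {\<xi> \<in> boundary I. V \<xi> = V \<xi>0}"
proof -
  assume b: "\<xi>0 \<in> boundary I" and m: "V \<xi>0 \<in> Mfin I"
  have "up I (fin I (V \<xi>0)) = {\<xi> \<in> boundary I. gle I (V \<xi>0) \<xi>}"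
    unfolding up_def cf_fin[OF m] ..
  also have "\<dots> = {\<xi> \<in> boundary I. V \<xi> = V \<xi>0}"
  proof (rule Collect_cong)
    fix \<xi>
    show "(\<xi> \<in> boundary I \<and> gle I (V \<xi>0) \<xi>) \<longleftrightarrow> (\<xi> \<in> boundary I \<and> V \<xi> = V \<xi>0)"
    proof
      assume "\<xi> \<in> boundary I \<and> gle I (V \<xi>0) \<xi>"
      then show "\<xi> \<in> boundary I \<and> V \<xi> = V \<xi>0" using ast2[OF b _ m] by blast
    next
      assume h: "\<xi> \<in> boundary I \<and> V \<xi> = V \<xi>0"
      then have "gle I (V \<xi>) \<xi>" using ast1 by blast
      then show "\<xi> \<in> boundary I \<and> gle I (V \<xi>0) \<xi>" using h by simp
    qed
  qed
  finally show ?thesis .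
qed

lemma Gen_sub: "Gen \<subseteq> up I ` heaps I"
  unfolding Gen_def using fin_heaps by auto

lemma Gen_countable: "countable Gen"
  using countable_subset[OF Gen_sub] heaps_countable by blast

lemma Gen_Pow: "Gen \<subseteq> Pow (boundary I)"
  using Gen_sub up_Pow by blast

lemma Gen_disj: "A \<in> Gen \<Longrightarrow> B \<in> Gen \<Longrightarrow> A \<inter> B \<noteq> {} \<Longrightarrow> A = B"
  unfolding Gen_def using level by auto

lemma Vf_UN: "Vf = \<Union>Gen"
  unfolding Vf_def Gen_def using level by auto

lemma sets_FV: "sets (FV I V) = sigma_sets (boundary I) Gen"
  unfolding FV_def Gen_def[symmetric] using Gen_Pow by (rule sets_measure_of)

lemma space_FV: "space (FV I V) = boundary I"
  unfolding FV_def Gen_def[symmetric] using Gen_Pow by (rule space_measure_of)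

lemma Gen_sets: "Gen \<subseteq> sets P"
  using Gen_sub up_sets[OF bern] by blast

lemma subalg: "subalgebra P (FV I V)"
  unfolding subalgebra_def
proof
  show "space (FV I V) = space P" using space_FV space_P[OF bern] by simp
  show "sets (FV I V) \<subseteq> sets P"
    using sets_FV sets.sigma_sets_subset[OF Gen_sets] space_P[OF bern] by simp
qed

lemma FV_struct: "A \<in> sigma_sets (boundary I) Gen \<Longrightarrow> G \<in> Gen \<Longrightarrow> G \<subseteq> A \<or> G \<inter> A = {}"
proof (induction arbitrary: G rule: sigma_sets.induct)
  case (Basic a) then show ?case using Gen_disj by blast
next
  case Empty then show ?case by simp
next
  case (Compl a)
  have "G \<subseteq> boundary I" using Compl.prems Gen_Pow by blast
  then show ?case using Compl.IH[OF Compl.prems] by blast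
next
  case (Union a)
  show ?case
  proof (cases "\<exists>i. G \<subseteq> a i")
    case True then show ?thesis by blast
  next
    case False then show ?thesis using Union.IH[OF Union.prems] by blast
  qed
qed

lemma Vf_FV: "Vf \<in> sets (FV I V)"
  unfolding Vf_UN using Gen_countable sets_FV by (intro sets.countable_Union) (auto intro: sigma_sets.Basic)

lemma Vf_sets: "Vf \<in> sets P" using Vf_FV subalg unfolding subalgebra_def by blast

lemma on_Gen: "G \<in> Gen \<Longrightarrow> \<exists>u. G = up I (heap I u) \<and> (\<forall>\<xi>\<in>G. V \<xi> \<in> Mfin I \<and> fin I (V \<xi>) = heap I u)"
proof -
  assume "G \<in> Gen"
  then obtain \<xi>0 where x0: "\<xi>0 \<in> boundary I" "V \<xi>0 \<in> Mfin I" "G = up I (fin I (V \<xi>0))"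
    unfolding Gen_def by blast
  obtain u where u: "fin I (V \<xi>0) = heap I u" using fin_heaps by (auto simp: heaps_def)
  show ?thesis using level[OF x0(1,2)] x0(2,3) u by auto
qed

context
  fixes \<psi> :: "'a gheap \<Rightarrow> real" assumes psi: "\<psi> \<in> borel_measurable (cyl_space I)"
begin

definition f where "f \<xi> = ennreal (shifted I V \<psi> \<xi>)" for \<xi>
definition c where "c = (\<integral>\<^sup>+\<xi>. ennreal (\<psi> \<xi>) \<partial>P)"
definition g where "g \<xi> = c * indicator Vf \<xi>" for \<xi>

lemma f_on_Gen: "G = up I (heap I u) \<Longrightarrow> (\<forall>\<xi>\<in>G. V \<xi> \<in> Mfin I \<and> fin I (V \<xi>) = heap I u) \<Longrightarrow>
  \<xi> \<in> G \<Longrightarrow> f \<xi> = ennreal (\<psi> (minus_heap I \<xi> (heap I u)))"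
  unfolding f_def shifted_def shift_def by auto

lemma f_off: "\<xi> \<notin> Vf \<Longrightarrow> \<xi> \<in> boundary I \<Longrightarrow> f \<xi> = 0"
  unfolding f_def shifted_def Vf_def by auto

lemma f_meas: "f \<in> borel_measurable P"
proof (rule measurable_piecewise_restrict[where C = "insert (boundary I - Vf) Gen"])
  show "countable (insert (boundary I - Vf) Gen)" using Gen_countable by simp
next
  fix \<Omega> assume o: "\<Omega> \<in> insert (boundary I - Vf) Gen"
  have "\<Omega> \<subseteq> boundary I" using o Gen_Pow by blast
  then have "\<Omega> \<inter> space P = \<Omega>" using space_P[OF bern] by blast
  moreover have "\<Omega> \<in> sets P"
    using o Gen_sets sets.Diff[OF sets.top Vf_sets] space_P[OF bern] by auto
  ultimately show "\<Omega> \<inter> space P \<in> sets P" by simp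
next
  show "space P \<subseteq> \<Union>(insert (boundary I - Vf) Gen)" using space_P[OF bern] Vf_UN by auto
next
  fix \<Omega> assume \<Omega>: "\<Omega> \<in> insert (boundary I - Vf) Gen"
  show "f \<in> borel_measurable (restrict_space P \<Omega>)"
  proof (cases "\<Omega> \<in> Gen")
    case True
    then obtain u where u: "\<Omega> = up I (heap I u)" "\<forall>\<xi>\<in>\<Omega>. V \<xi> \<in> Mfin I \<and> fin I (V \<xi>) = heap I u"
      using on_Gen by blast
    have m1: "(\<lambda>\<xi>. \<psi> (minus_heap I \<xi> (heap I u))) \<in> borel_measurable (restrict_space P \<Omega>)"
      using measurable_compose[OF minus_meas[OF bern, of u] psi] u(1) by simp
    have m2: "(\<lambda>\<xi>. ennreal (\<psi> (minus_heap I \<xi> (heap I u)))) \<in> borel_measurable (restrict_space P \<Omega>)"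
      using measurable_compose[OF m1 measurable_ennreal] by simp
    have eq: "\<And>\<xi>. \<xi> \<in> space (restrict_space P \<Omega>) \<Longrightarrow> f \<xi> = ennreal (\<psi> (minus_heap I \<xi> (heap I u)))"
    proof -
      fix \<xi> assume "\<xi> \<in> space (restrict_space P \<Omega>)"
      then have "\<xi> \<in> \<Omega>" by (simp add: space_restrict_space)
      then show "f \<xi> = ennreal (\<psi> (minus_heap I \<xi> (heap I u)))" by (rule f_on_Gen[OF u])
    qed
    show ?thesis using measurable_cong[of "restrict_space P \<Omega>" f, OF eq] m2 by blast
  next
    case False
    then have "\<Omega> = boundary I - Vf" using \<Omega> by blast
    then have "\<And>\<xi>. \<xi> \<in> space (restrict_space P \<Omega>) \<Longrightarrow> f \<xi> = 0"
      using f_off space_P[OF bern] by (auto simp: space_restrict_space)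
    then show ?thesis using measurable_cong[of "restrict_space P \<Omega>" f "\<lambda>_. 0"] by simp
  qed
qed

lemma g_meas: "g \<in> borel_measurable (FV I V)"
  unfolding g_def using Vf_FV by measurable

lemma TW: "E \<in> insert {} Gen \<Longrightarrow> (\<integral>\<^sup>+\<xi>. f \<xi> * indicator E \<xi> \<partial>P) = (\<integral>\<^sup>+\<xi>. g \<xi> * indicator E \<xi> \<partial>P)"
proof (cases "E = {}")
  case True then show ?thesis by simp
next
  case False
  assume "E \<in> insert {} Gen"
  then have EG: "E \<in> Gen" using False by blast
  then obtain u where u: "E = up I (heap I u)" "\<forall>\<xi>\<in>E. V \<xi> \<in> Mfin I \<and> fin I (V \<xi>) = heap I u"
    using on_Gen by blast
  have "(\<integral>\<^sup>+\<xi>. f \<xi> * indicator E \<xi> \<partial>P)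
      = (\<integral>\<^sup>+\<xi>. ennreal (\<psi> (minus_heap I \<xi> (heap I u))) * indicator (up I (heap I u)) \<xi> \<partial>P)"
    by (rule nn_integral_cong) (use f_on_Gen[OF u] u(1) in \<open>auto split: split_indicator\<close>)
  also have "\<dots> = emeasure P E * c" using core[OF bern psi, of u] u(1) c_def by simp
  also have "\<dots> = (\<integral>\<^sup>+\<xi>. c * indicator E \<xi> \<partial>P)"
  proof -
    have "E \<in> sets P" using EG Gen_sets by blast
    then show ?thesis using nn_integral_cmult_indicator[of E P c] by (simp add: mult.commute)
  qed
  also have "\<dots> = (\<integral>\<^sup>+\<xi>. g \<xi> * indicator E \<xi> \<partial>P)"
  proof (rule nn_integral_cong)
    fix \<xi> have "E \<subseteq> Vf" using EG Vf_UN by blast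
    then show "c * indicator E \<xi> = g \<xi> * indicator E \<xi>" unfolding g_def by (auto split: split_indicator)
  qed
  finally show ?thesis .
qed

lemma set_int_eq:
  assumes A: "A \<in> sets (FV I V)"
  shows "(\<integral>\<^sup>+\<xi>\<in>A. f \<xi> \<partial>P) = (\<integral>\<^sup>+\<xi>\<in>A. g \<xi> \<partial>P)"
proof -
  define F where "F n = (if Gen = {} then {} else from_nat_into Gen n)" for n
  define D where "D = disjointed F"
  have FG: "F n \<in> insert {} Gen" for n
    unfolding F_def using from_nat_into[of Gen n] by (cases "Gen = {}") auto
  have UF: "(\<Union>n. F n) = Vf"
  proof (cases "Gen = {}")
    case True then show ?thesis using Vf_UN F_def by simp
  next
    case False
    have "(\<Union>n. F n) \<subseteq> \<Union>Gen"
    proof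
      fix x assume "x \<in> (\<Union>n. F n)"
      then obtain n where "x \<in> F n" by blast
      then show "x \<in> \<Union>Gen" using FG[of n] by blast
    qed
    moreover have "\<Union>Gen \<subseteq> (\<Union>n. F n)"
    proof
      fix x assume "x \<in> \<Union>Gen"
      then obtain G where G: "G \<in> Gen" "x \<in> G" by blast
      then obtain n where "from_nat_into Gen n = G" using from_nat_into_surj[OF Gen_countable] by blast
      then have "F n = G" using False F_def by simp
      then show "x \<in> (\<Union>n. F n)" using G by blast
    qed
    ultimately have "(\<Union>n. F n) = \<Union>Gen" by (rule subset_antisym)
    then show ?thesis using Vf_UN by simp
  qed
  have DG: "D n \<in> insert {} Gen" for n
  proof (cases "\<exists>i<n. F i \<inter> F n \<noteq> {}")
    case True
    then obtain i where i: "i < n" "F i \<inter> F n \<noteq> {}" by blast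
    then have "F i = F n" using FG Gen_disj by blast
    then have "D n = {}" using i unfolding D_def disjointed_def by auto
    then show ?thesis by simp
  next
    case False
    then have "D n = F n" unfolding D_def disjointed_def by auto
    then show ?thesis using FG by simp
  qed
  have UD: "(\<Union>n. D n) = Vf" using UF UN_disjointed_eq D_def by metis
  have dD: "disjoint_family D" unfolding D_def by (rule disjoint_family_disjointed)
  have AD: "A \<inter> D n \<in> insert {} Gen" for n
  proof (cases "D n = {}")
    case True then show ?thesis by simp
  next
    case False
    then have "D n \<in> Gen" using DG by blast
    then have "D n \<subseteq> A \<or> D n \<inter> A = {}" using FV_struct A sets_FV by simp
    then show ?thesis using \<open>D n \<in> Gen\<close> by (auto simp: Int_absorb1 Int_commute)
  qed
  have ADs: "A \<inter> D n \<in> sets P" for n using AD[of n] Gen_sets by auto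
  have dAD: "disjoint_family (\<lambda>n. A \<inter> D n)" using dD unfolding disjoint_family_on_def by blast
  have UAD: "(\<Union>n. A \<inter> D n) = A \<inter> Vf" using UD by blast
  have fz: "\<And>\<xi>. \<xi> \<in> space P \<Longrightarrow> f \<xi> * indicator A \<xi> = f \<xi> * indicator (A \<inter> Vf) \<xi>"
    using f_off space_P[OF bern] by (auto split: split_indicator)
  have gz: "\<And>\<xi>. g \<xi> * indicator A \<xi> = g \<xi> * indicator (A \<inter> Vf) \<xi>"
    unfolding g_def by (auto split: split_indicator)
  have gmP: "g \<in> borel_measurable P" using g_meas subalg measurable_from_subalg by blast
  have "(\<integral>\<^sup>+\<xi>\<in>A. f \<xi> \<partial>P) = (\<integral>\<^sup>+\<xi>\<in>(\<Union>n. A \<inter> D n). f \<xi> \<partial>P)"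
    using fz UAD by (intro nn_integral_cong) auto
  also have "\<dots> = (\<Sum>n. (\<integral>\<^sup>+\<xi>\<in>A \<inter> D n. f \<xi> \<partial>P))"
    by (rule nn_integral_disjoint_family[OF f_meas ADs dAD])
  also have "\<dots> = (\<Sum>n. (\<integral>\<^sup>+\<xi>\<in>A \<inter> D n. g \<xi> \<partial>P))"
    using TW[OF AD] by simp
  also have "\<dots> = (\<integral>\<^sup>+\<xi>\<in>(\<Union>n. A \<inter> D n). g \<xi> \<partial>P)"
    by (rule nn_integral_disjoint_family[OF gmP ADs dAD, symmetric])
  also have "\<dots> = (\<integral>\<^sup>+\<xi>\<in>A. g \<xi> \<partial>P)"
    using gz UAD by simp
  finally show ?thesis .
qed

lemma main_nn0: "AE \<xi> in P. V \<xi> \<in> Mfin I \<longrightarrow> nn_cond_exp P (FV I V) f \<xi> = c"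
proof -
  interpret prob_space P by (rule prob_P[OF bern])
  interpret fs: finite_measure_subalgebra P "FV I V"
    by unfold_locales (rule subalg)
  have "AE \<xi> in P. g \<xi> = nn_cond_exp P (FV I V) f \<xi>"
    by (rule fs.nn_cond_exp_charact[OF set_int_eq f_meas g_meas])
  moreover have "AE \<xi> in P. \<xi> \<in> space P" by simp
  ultimately show ?thesis
  proof eventually_elim
    case (elim \<xi>)
    then show ?case using space_P[OF bern] unfolding g_def Vf_def by auto
  qed
qed

lemma main_nn: "AE \<xi> in P. V \<xi> \<in> Mfin I \<longrightarrow>
   nn_cond_exp P (FV I V) (\<lambda>\<zeta>. ennreal (shifted I V \<psi> \<zeta>)) \<xi> = (\<integral>\<^sup>+\<zeta>. ennreal (\<psi> \<zeta>) \<partial>P)"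
proof -
  have "f = (\<lambda>\<zeta>. ennreal (shifted I V \<psi> \<zeta>))" by (rule ext) (simp add: f_def)
  then show ?thesis using main_nn0 c_def by simp
qed

end

end
end

theorem theorem1:
  fixes I :: "('a::finite \<times> 'a) set"
    and P :: "'a gheap measure"
    and V :: "'a gheap \<Rightarrow> 'a gheap"
    and \<psi> :: "'a gheap \<Rightarrow> real"
  assumes "CARD('a) \<ge> 2"
    and "sym I" and "irrefl I"
    and "\<forall>a b. (a, b) \<in> (- I)\<^sup>*"
    and "bernoulli I P"
    and "AST I V"
    and "\<psi> \<in> borel_measurable (cyl_space I)"
  shows "((\<forall>\<xi>\<in>boundary I. \<psi> \<xi> \<ge> 0) \<longrightarrow>
           (AE \<xi> in P. V \<xi> \<in> Mfin I \<longrightarrow>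
              nn_cond_exp P (FV I V) (\<lambda>\<zeta>. ennreal (shifted I V \<psi> \<zeta>)) \<xi>
                = (\<integral>\<^sup>+ \<zeta>. ennreal (\<psi> \<zeta>) \<partial>P)))
       \<and> (integrable P \<psi> \<longrightarrow>
           (AE \<xi> in P. V \<xi> \<in> Mfin I \<longrightarrow>
              real_cond_exp P (FV I V) (shifted I V \<psi>) \<xi> = (\<integral> \<zeta>. \<psi> \<zeta> \<partial>P)))"
proof -
  interpret hp I using assms(2,3) by unfold_locales
  have nn: "\<And>\<phi>. \<phi> \<in> borel_measurable (cyl_space I) \<Longrightarrow> AE \<xi> in P. V \<xi> \<in> Mfin I \<longrightarrow>
     nn_cond_exp P (FV I V) (\<lambda>\<zeta>. ennreal (shifted I V \<phi> \<zeta>)) \<xi> = (\<integral>\<^sup>+\<zeta>. ennreal (\<phi> \<zeta>) \<partial>P)"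
    using main_nn[OF assms(5,6)] by blast
  have part2: "integrable P \<psi> \<Longrightarrow> (AE \<xi> in P. V \<xi> \<in> Mfin I \<longrightarrow>
              real_cond_exp P (FV I V) (shifted I V \<psi>) \<xi> = (\<integral> \<zeta>. \<psi> \<zeta> \<partial>P))"
  proof -
    assume int: "integrable P \<psi>"
    have m2: "(\<lambda>z. - \<psi> z) \<in> borel_measurable (cyl_space I)" using assms(7) by measurable
    have neg: "(\<lambda>x. ennreal (- shifted I V \<psi> x)) = (\<lambda>\<zeta>. ennreal (shifted I V (\<lambda>z. - \<psi> z) \<zeta>))"
      by (rule ext) (simp add: shifted_def)
    note ae1 = nn[OF assms(7)]
    note ae2 = nn[OF m2]
    have ie: "(\<integral> \<zeta>. \<psi> \<zeta> \<partial>P) = enn2real (\<integral>\<^sup>+\<zeta>. ennreal (\<psi> \<zeta>) \<partial>P) - enn2real (\<integral>\<^sup>+\<zeta>. ennreal (- \<psi> \<zeta>) \<partial>P)"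
      by (rule real_lebesgue_integral_def[OF int])
    show ?thesis using ae1 ae2
    proof eventually_elim
      case (elim \<xi>)
      show ?case
      proof
        assume "V \<xi> \<in> Mfin I"
        then show "real_cond_exp P (FV I V) (shifted I V \<psi>) \<xi> = (\<integral> \<zeta>. \<psi> \<zeta> \<partial>P)"
          using elim ie unfolding real_cond_exp_def by (simp only: neg)
      qed
    qed
  qed
  show ?thesis using nn[OF assms(7)] part2 by blast
qed


end
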